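(* Let $(H,R)$ be a semiquasitriangular Hopf algebra with Drinfeld element $u=S(R^{(2)})R^{(1)}$, and let $R_{21}=R^{(2)}\otimes R^{(1)}$. Then $\epsilon(u)=1$ and $$\Delta(u)=(R_{21}R)^{-1}(u\otimes u)=(u\otimes u)(R_{21}R)^{-1},$$ $$\Delta(S(u))=(R_{21}R)^{-1}(S(u)\otimes S(u))=(S(u)\otimes S(u))(R_{21}R)^{-1},$$ $$\Delta(uS(u))=(R_{21}R)^{-2}(uS(u)\otimes uS(u))=(uS(u)\otimes uS(u))(R_{21}R)^{-2}.$$
   Context: All vector spaces are over a field $k$, $\otimes=\otimes_k$. For a Hopf algebra $H$ with comultiplication $\Delta$, counit $\epsilon$, antipode $S$, we use Sweedler notation $\Delta(h)=h_1\otimes h_2$, etc. $\operatorname{Z}(H)$ is the centre of $H$. For $R\in H\otimes H$ we write $R=R^{(1)}\otimes R^{(2)}$ (summation understood); $R'^{(1)}\otimes R'^{(2)}$ denotes another copy of $R$. Definition (semiquasitriangular Hopf algebra): a pair $(H,R)$ with $H$ a Hopf algebra with bijective antipode and $R\in H\otimes H$ invertible such that (1) $R^{(1)}_1\otimes R^{(1)}_2\otimes R^{(2)} = R^{(1)}\otimes R'^{(1)}\otimes R^{(2)}R'^{(2)}$; (2) $R^{(1)}\otimes R^{(2)}_1\otimes R^{(2)}_2 = R^{(1)}R'^{(1)}\otimes R'^{(2)}\otimes R^{(2)}$; (3) $R^{(1)}\otimes R^{(2)}_2R'^{(1)}\otimes R^{(2)}_1R'^{(2)} = R^{(1)}\otimes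 R'^{(1)}R^{(2)}_1\otimes R'^{(2)}R^{(2)}_2$; (4) $R^{(1)}_2R'^{(1)}\otimes R^{(1)}_1R'^{(2)}\otimes R^{(2)} = R'^{(1)}R^{(1)}_1\otimes R'^{(2)}R^{(1)}_2\otimes R^{(2)}$; (5) $\nu(h):=R^{(2)}h_2R'^{(2)}\otimes S(h_1)S(R^{(1)})h_3R'^{(1)}\in H\otimes\operatorname{Z}(H)$ for all $h\in H$; (6) $\nu(h)=R^{(1)}h_2R'^{(1)}\otimes S(R'^{(2)})S(h_1)R^{(2)}h_3$ for all $h\in H$. *)

theory Defs
  imports Complex_Main
begin

definition k_algebra :: "('k::field \<Rightarrow> 'a::ring_1 \<Rightarrow> 'a) \<Rightarrow> bool" where
  "k_algebra s \<longleftrightarrow> Vector_Spaces.vector_space s \<and>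
     (\<forall>c x y. s c (x * y) = s c x * y \<and> s c (x * y) = x * s c y)"

definition bilinear_map ::
  "('k::field \<Rightarrow> 'h::ab_group_add \<Rightarrow> 'h) \<Rightarrow> ('k \<Rightarrow> 'v::ab_group_add \<Rightarrow> 'v)
     \<Rightarrow> ('h \<Rightarrow> 'h \<Rightarrow> 'v) \<Rightarrow> bool" where
  "bilinear_map sH sV f \<longleftrightarrow>
     (\<forall>a. Vector_Spaces.linear sH sV (f a)) \<and> (\<forall>b. Vector_Spaces.linear sH sV (\<lambda>a. f a b))"

definition trilinear_map ::
  "('k::field \<Rightarrow> 'h::ab_group_add \<Rightarrow> 'h) \<Rightarrow> ('k \<Rightarrow> 'v::ab_group_add \<Rightarrow> 'v)
     \<Rightarrow> ('h \<Rightarrow> 'h \<Rightarrow> 'h \<Rightarrow> 'v) \<Rightarrow> bool" where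
  "trilinear_map sH sV f \<longleftrightarrow>
     (\<forall>a b. Vector_Spaces.linear sH sV (f a b)) \<and> (\<forall>a c. Vector_Spaces.linear sH sV (\<lambda>b. f a b c))
     \<and> (\<forall>b c. Vector_Spaces.linear sH sV (\<lambda>a. f a b c))"

text \<open>(t2 : H \<times> H \<rightarrow> HH) is a tensor product H \<otimes> H: a bilinear map whose image spans HH and
  which maps (B \<times> C) injectively onto a linearly independent set whenever B, C are linearly
  independent (equivalently: for bases B, C of H, the t2 b c form a basis of HH).\<close>
definition is_tensor2 ::
  "('k::field \<Rightarrow> 'h::ab_group_add \<Rightarrow> 'h) \<Rightarrow> ('k \<Rightarrow> 'hh::ab_group_add \<Rightarrow> 'hh)
     \<Rightarrow> ('h \<Rightarrow> 'h \<Rightarrow> 'hh) \<Rightarrow> bool" where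
  "is_tensor2 sH s2 t2 \<longleftrightarrow> Vector_Spaces.vector_space sH \<and> Vector_Spaces.vector_space s2 \<and> bilinear_map sH s2 t2 \<and>
     module.span s2 (range (case_prod t2)) = UNIV \<and>
     (\<forall>B C. \<not> module.dependent sH B \<and> \<not> module.dependent sH C \<longrightarrow>
        inj_on (case_prod t2) (B \<times> C) \<and> \<not> module.dependent s2 (case_prod t2 ` (B \<times> C)))"

definition is_tensor3 ::
  "('k::field \<Rightarrow> 'h::ab_group_add \<Rightarrow> 'h) \<Rightarrow> ('k \<Rightarrow> 'hhh::ab_group_add \<Rightarrow> 'hhh)
     \<Rightarrow> ('h \<Rightarrow> 'h \<Rightarrow> 'h \<Rightarrow> 'hhh) \<Rightarrow> bool" where
  "is_tensor3 sH s3 t3 \<longleftrightarrow> Vector_Spaces.vector_space sH \<and> Vector_Spaces.vector_space s3 \<and> trilinear_map sH s3 t3 \<and>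
     module.span s3 (range (\<lambda>(a, b, c). t3 a b c)) = UNIV \<and>
     (\<forall>B C D. \<not> module.dependent sH B \<and> \<not> module.dependent sH C \<and> \<not> module.dependent sH D \<longrightarrow>
        inj_on (\<lambda>(a, b, c). t3 a b c) (B \<times> C \<times> D) \<and>
        \<not> module.dependent s3 ((\<lambda>(a, b, c). t3 a b c) ` (B \<times> C \<times> D)))"

definition tensor_algebra2 ::
  "('k::field \<Rightarrow> 'h::ring_1 \<Rightarrow> 'h) \<Rightarrow> ('k \<Rightarrow> 'hh::ring_1 \<Rightarrow> 'hh) \<Rightarrow> ('h \<Rightarrow> 'h \<Rightarrow> 'hh) \<Rightarrow> bool" where
  "tensor_algebra2 sH s2 t2 \<longleftrightarrow> is_tensor2 sH s2 t2 \<and> k_algebra s2 \<and>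
     (\<forall>a b c d. t2 a b * t2 c d = t2 (a * c) (b * d)) \<and> t2 1 1 = 1"

definition tensor_algebra3 ::
  "('k::field \<Rightarrow> 'h::ring_1 \<Rightarrow> 'h) \<Rightarrow> ('k \<Rightarrow> 'hhh::ring_1 \<Rightarrow> 'hhh) \<Rightarrow> ('h \<Rightarrow> 'h \<Rightarrow> 'h \<Rightarrow> 'hhh) \<Rightarrow> bool" where
  "tensor_algebra3 sH s3 t3 \<longleftrightarrow> is_tensor3 sH s3 t3 \<and> k_algebra s3 \<and>
     (\<forall>a b c a' b' c'. t3 a b c * t3 a' b' c' = t3 (a * a') (b * b') (c * c')) \<and> t3 1 1 1 = 1"

text \<open>Linear extension of a bilinear (trilinear) map along the tensor product
  (well defined by the universal property; this is how Sweedler sums are interpreted).\<close>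
definition lift2 ::
  "('k::field \<Rightarrow> 'hh::ab_group_add \<Rightarrow> 'hh) \<Rightarrow> ('k \<Rightarrow> 'v::ab_group_add \<Rightarrow> 'v)
     \<Rightarrow> ('h \<Rightarrow> 'h \<Rightarrow> 'hh) \<Rightarrow> ('h \<Rightarrow> 'h \<Rightarrow> 'v) \<Rightarrow> 'hh \<Rightarrow> 'v" where
  "lift2 s2 sV t2 f = (SOME g. Vector_Spaces.linear s2 sV g \<and> (\<forall>a b. g (t2 a b) = f a b))"

definition lift3 ::
  "('k::field \<Rightarrow> 'hhh::ab_group_add \<Rightarrow> 'hhh) \<Rightarrow> ('k \<Rightarrow> 'v::ab_group_add \<Rightarrow> 'v)
     \<Rightarrow> ('h \<Rightarrow> 'h \<Rightarrow> 'h \<Rightarrow> 'hhh) \<Rightarrow> ('h \<Rightarrow> 'h \<Rightarrow> 'h \<Rightarrow> 'v) \<Rightarrow> 'hhh \<Rightarrow> 'v" where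
  "lift3 s3 sV t3 f = (SOME g. Vector_Spaces.linear s3 sV g \<and> (\<forall>a b c. g (t3 a b c) = f a b c))"

definition rinv :: "'a::ring_1 \<Rightarrow> 'a" where
  "rinv x = (THE y. x * y = 1 \<and> y * x = 1)"

definition center :: "'a::ring_1 set" where
  "center = {z. \<forall>x. z * x = x * z}"

definition delta_id ::
  "('k::field \<Rightarrow> 'hh::ab_group_add \<Rightarrow> 'hh) \<Rightarrow> ('k \<Rightarrow> 'hhh::ab_group_add \<Rightarrow> 'hhh)
    \<Rightarrow> ('h \<Rightarrow> 'h \<Rightarrow> 'hh) \<Rightarrow> ('h \<Rightarrow> 'h \<Rightarrow> 'h \<Rightarrow> 'hhh) \<Rightarrow> ('h \<Rightarrow> 'hh) \<Rightarrow> 'hh \<Rightarrow> 'hhh" where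
  "delta_id s2 s3 t2 t3 \<Delta> = lift2 s2 s3 t2 (\<lambda>a b. lift2 s2 s3 t2 (\<lambda>c d. t3 c d b) (\<Delta> a))"

definition id_delta ::
  "('k::field \<Rightarrow> 'hh::ab_group_add \<Rightarrow> 'hh) \<Rightarrow> ('k \<Rightarrow> 'hhh::ab_group_add \<Rightarrow> 'hhh)
    \<Rightarrow> ('h \<Rightarrow> 'h \<Rightarrow> 'hh) \<Rightarrow> ('h \<Rightarrow> 'h \<Rightarrow> 'h \<Rightarrow> 'hhh) \<Rightarrow> ('h \<Rightarrow> 'hh) \<Rightarrow> 'hh \<Rightarrow> 'hhh" where
  "id_delta s2 s3 t2 t3 \<Delta> = lift2 s2 s3 t2 (\<lambda>a b. lift2 s2 s3 t2 (\<lambda>c d. t3 a c d) (\<Delta> b))"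

definition hopf_algebra ::
  "('k::field \<Rightarrow> 'h::ring_1 \<Rightarrow> 'h) \<Rightarrow> ('k \<Rightarrow> 'hh::ring_1 \<Rightarrow> 'hh) \<Rightarrow> ('h \<Rightarrow> 'h \<Rightarrow> 'hh)
    \<Rightarrow> ('k \<Rightarrow> 'hhh::ring_1 \<Rightarrow> 'hhh) \<Rightarrow> ('h \<Rightarrow> 'h \<Rightarrow> 'h \<Rightarrow> 'hhh)
    \<Rightarrow> ('h \<Rightarrow> 'hh) \<Rightarrow> ('h \<Rightarrow> 'k) \<Rightarrow> ('h \<Rightarrow> 'h) \<Rightarrow> bool" where
  "hopf_algebra sH s2 t2 s3 t3 \<Delta> \<epsilon> S \<longleftrightarrow>
     k_algebra sH \<and> tensor_algebra2 sH s2 t2 \<and> tensor_algebra3 sH s3 t3 \<and>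
     Vector_Spaces.linear sH s2 \<Delta> \<and> \<Delta> 1 = 1 \<and> (\<forall>x y. \<Delta> (x * y) = \<Delta> x * \<Delta> y) \<and>
     Vector_Spaces.linear sH (*) \<epsilon> \<and> \<epsilon> 1 = 1 \<and> (\<forall>x y. \<epsilon> (x * y) = \<epsilon> x * \<epsilon> y) \<and>
     (\<forall>h. delta_id s2 s3 t2 t3 \<Delta> (\<Delta> h) = id_delta s2 s3 t2 t3 \<Delta> (\<Delta> h)) \<and>
     (\<forall>h. lift2 s2 sH t2 (\<lambda>a b. sH (\<epsilon> a) b) (\<Delta> h) = h) \<and>
     (\<forall>h. lift2 s2 sH t2 (\<lambda>a b. sH (\<epsilon> b) a) (\<Delta> h) = h) \<and>
     Vector_Spaces.linear sH sH S \<and>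
     (\<forall>h. lift2 s2 sH t2 (\<lambda>a b. S a * b) (\<Delta> h) = sH (\<epsilon> h) 1) \<and>
     (\<forall>h. lift2 s2 sH t2 (\<lambda>a b. a * S b) (\<Delta> h) = sH (\<epsilon> h) 1)"

text \<open>Throughout, lift2 ... (\<lambda>a b. ...) R stands for the Sweedler sum over R = a \<otimes> b.\<close>
definition semiquasitriangular ::
  "('k::field \<Rightarrow> 'h::ring_1 \<Rightarrow> 'h) \<Rightarrow> ('k \<Rightarrow> 'hh::ring_1 \<Rightarrow> 'hh) \<Rightarrow> ('h \<Rightarrow> 'h \<Rightarrow> 'hh)
    \<Rightarrow> ('k \<Rightarrow> 'hhh::ring_1 \<Rightarrow> 'hhh) \<Rightarrow> ('h \<Rightarrow> 'h \<Rightarrow> 'h \<Rightarrow> 'hhh)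
    \<Rightarrow> ('h \<Rightarrow> 'hh) \<Rightarrow> ('h \<Rightarrow> 'k) \<Rightarrow> ('h \<Rightarrow> 'h) \<Rightarrow> 'hh \<Rightarrow> bool" where
  "semiquasitriangular sH s2 t2 s3 t3 \<Delta> \<epsilon> S R \<longleftrightarrow>
     hopf_algebra sH s2 t2 s3 t3 \<Delta> \<epsilon> S \<and> bij S \<and>
     (\<exists>R'. R * R' = 1 \<and> R' * R = 1) \<and>
     \<comment> \<open>(1)\<close>
     lift2 s2 s3 t2 (\<lambda>a b. lift2 s2 s3 t2 (\<lambda>c d. t3 c d b) (\<Delta> a)) R =
       lift2 s2 s3 t2 (\<lambda>a b. lift2 s2 s3 t2 (\<lambda>c d. t3 a c (b * d)) R) R \<and>
     \<comment> \<open>(2)\<close>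
     lift2 s2 s3 t2 (\<lambda>a b. lift2 s2 s3 t2 (\<lambda>c d. t3 a c d) (\<Delta> b)) R =
       lift2 s2 s3 t2 (\<lambda>a b. lift2 s2 s3 t2 (\<lambda>c d. t3 (a * c) d b) R) R \<and>
     \<comment> \<open>(3)\<close>
     lift2 s2 s3 t2 (\<lambda>a b. lift2 s2 s3 t2 (\<lambda>b1 b2.
         lift2 s2 s3 t2 (\<lambda>c d. t3 a (b2 * c) (b1 * d)) R) (\<Delta> b)) R =
       lift2 s2 s3 t2 (\<lambda>a b. lift2 s2 s3 t2 (\<lambda>b1 b2.
         lift2 s2 s3 t2 (\<lambda>c d. t3 a (c * b1) (d * b2)) R) (\<Delta> b)) R \<and>
     \<comment> \<open>(4)\<close>
     lift2 s2 s3 t2 (\<lambda>a b. lift2 s2 s3 t2 (\<lambda>a1 a2.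
         lift2 s2 s3 t2 (\<lambda>c d. t3 (a2 * c) (a1 * d) b) R) (\<Delta> a)) R =
       lift2 s2 s3 t2 (\<lambda>a b. lift2 s2 s3 t2 (\<lambda>a1 a2.
         lift2 s2 s3 t2 (\<lambda>c d. t3 (c * a1) (d * a2) b) R) (\<Delta> a)) R \<and>
     \<comment> \<open>(5)\<close>
     (\<forall>h. lift3 s3 s2 t3 (\<lambda>h1 h2 h3. lift2 s2 s2 t2 (\<lambda>a b.
            lift2 s2 s2 t2 (\<lambda>c d. t2 (b * h2 * d) (S h1 * S a * h3 * c)) R) R)
          (delta_id s2 s3 t2 t3 \<Delta> (\<Delta> h))
        \<in> module.span s2 {t2 x z | x z. z \<in> center}) \<and>
     \<comment> \<open>(6)\<close>
     (\<forall>h. lift3 s3 s2 t3 (\<lambda>h1 h2 h3. lift2 s2 s2 t2 (\<lambda>a b.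
            lift2 s2 s2 t2 (\<lambda>c d. t2 (b * h2 * d) (S h1 * S a * h3 * c)) R) R)
          (delta_id s2 s3 t2 t3 \<Delta> (\<Delta> h)) =
        lift3 s3 s2 t3 (\<lambda>h1 h2 h3. lift2 s2 s2 t2 (\<lambda>a b.
            lift2 s2 s2 t2 (\<lambda>c d. t2 (a * h2 * c) (S d * S h1 * b * h3)) R) R)
          (delta_id s2 s3 t2 t3 \<Delta> (\<Delta> h)))"

definition drinfeld_u ::
  "('k::field \<Rightarrow> 'h::ring_1 \<Rightarrow> 'h) \<Rightarrow> ('k \<Rightarrow> 'hh::ring_1 \<Rightarrow> 'hh) \<Rightarrow> ('h \<Rightarrow> 'h \<Rightarrow> 'hh)
    \<Rightarrow> ('h \<Rightarrow> 'h) \<Rightarrow> 'hh \<Rightarrow> 'h" where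
  "drinfeld_u sH s2 t2 S R = lift2 s2 sH t2 (\<lambda>a b. S b * a) R"

definition R21 ::
  "('k::field \<Rightarrow> 'hh::ring_1 \<Rightarrow> 'hh) \<Rightarrow> ('h \<Rightarrow> 'h \<Rightarrow> 'hh) \<Rightarrow> 'hh \<Rightarrow> 'hh" where
  "R21 s2 t2 R = lift2 s2 s2 t2 (\<lambda>a b. t2 b a) R"

end

theory Submission
  imports Defs
begin

lemma vsp: "vector_space s1 \<Longrightarrow> vector_space s2 \<Longrightarrow> vector_space_pair s1 s2"
  by (simp add: vector_space_pair_def)

lemma lin_vs1: "Vector_Spaces.linear s1 s2 f \<Longrightarrow> vector_space s1"
  by (simp add: Vector_Spaces.linear_iff)
lemma lin_vs2: "Vector_Spaces.linear s1 s2 f \<Longrightarrow> vector_space s2"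
  by (simp add: Vector_Spaces.linear_iff)
lemma lin_add: "Vector_Spaces.linear s1 s2 f \<Longrightarrow> f (x + y) = f x + f y"
  by (simp add: Vector_Spaces.linear_iff)
lemma lin_scale: "Vector_Spaces.linear s1 s2 f \<Longrightarrow> f (s1 c x) = s2 c (f x)"
  by (simp add: Vector_Spaces.linear_iff)
lemma lin_sum: "Vector_Spaces.linear s1 s2 f \<Longrightarrow> f (sum g I) = (\<Sum>i\<in>I. f (g i))"
  by (metis linear_iff_module_hom module_hom.sum)
lemma lin_0: "Vector_Spaces.linear s1 s2 f \<Longrightarrow> f 0 = 0"
  by (metis linear_iff_module_hom module_hom.zero)
lemma lin_diff: "Vector_Spaces.linear s1 s2 f \<Longrightarrow> f (x - y) = f x - f y"
  by (metis linear_iff_module_hom module_hom.diff)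
lemma lin_neg: "Vector_Spaces.linear s1 s2 f \<Longrightarrow> f (- x) = - f x"
  by (metis linear_iff_module_hom module_hom.neg)

lemma linI: "vector_space s1 \<Longrightarrow> vector_space s2 \<Longrightarrow> (\<And>x y. f (x + y) = f x + f y)
  \<Longrightarrow> (\<And>c x. f (s1 c x) = s2 c (f x)) \<Longrightarrow> Vector_Spaces.linear s1 s2 f"
  by (simp add: Vector_Spaces.linear_iff)

lemma lin_comp: "Vector_Spaces.linear s1 s2 f \<Longrightarrow> Vector_Spaces.linear s2 s3 g
   \<Longrightarrow> Vector_Spaces.linear s1 s3 (\<lambda>x. g (f x))"
  using Vector_Spaces.linear_compose[of s1 s2 f s3 g] by (simp add: o_def)

lemma lift2_ex:
  assumes T: "is_tensor2 sH s2 t2" and V: "vector_space sV" and f: "bilinear_map sH sV f"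
  shows "\<exists>g. Vector_Spaces.linear s2 sV g \<and> (\<forall>a b. g (t2 a b) = f a b)"
proof -
  have vH: "vector_space sH" and v2: "vector_space s2" and bt: "bilinear_map sH s2 t2"
    and indep: "\<And>B C. \<not> module.dependent sH B \<Longrightarrow> \<not> module.dependent sH C \<Longrightarrow>
        inj_on (case_prod t2) (B \<times> C) \<and> \<not> module.dependent s2 (case_prod t2 ` (B \<times> C))"
    using T unfolding is_tensor2_def by blast+
  interpret H: vector_space sH by fact
  interpret p2V: vector_space_pair s2 sV using v2 V by (rule vsp)
  interpret pHV: vector_space_pair sH sV using vH V by (rule vsp)
  obtain E where E: "H.independent E" "UNIV \<subseteq> H.span E"
    using H.basis_exists[of UNIV] by blast
  define P where "P = case_prod t2 ` (E \<times> E)"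
  have inj: "inj_on (case_prod t2) (E \<times> E)" and iP: "\<not> module.dependent s2 P"
    using indep[OF E(1) E(1)] by (auto simp: P_def)
  define g where "g = p2V.construct P (\<lambda>v. case_prod f (the_inv_into (E \<times> E) (case_prod t2) v))"
  have lg: "Vector_Spaces.linear s2 sV g" unfolding g_def
    by (rule p2V.linear_construct) (use iP in simp)
  have gE: "g (t2 a b) = f a b" if "a \<in> E" "b \<in> E" for a b
  proof -
    have "t2 a b \<in> P" using that by (force simp: P_def)
    then have "g (t2 a b) = case_prod f (the_inv_into (E \<times> E) (case_prod t2) (t2 a b))"
      unfolding g_def by (subst p2V.construct_basis) (use iP in auto)
    also have "the_inv_into (E \<times> E) (case_prod t2) (t2 a b) = (a, b)"
      using the_inv_into_f_f[OF inj, of "(a,b)"] that by simp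
    finally show ?thesis by simp
  qed
  have lt1: "Vector_Spaces.linear sH s2 (t2 a)" for a using bt by (simp add: bilinear_map_def)
  have lt2: "Vector_Spaces.linear sH s2 (\<lambda>a. t2 a b)" for b using bt by (simp add: bilinear_map_def)
  have lf1: "Vector_Spaces.linear sH sV (f a)" for a using f by (simp add: bilinear_map_def)
  have lf2: "Vector_Spaces.linear sH sV (\<lambda>a. f a b)" for b using f by (simp add: bilinear_map_def)
  have step1: "g (t2 a b) = f a b" if "a \<in> E" for a b
  proof (rule pHV.linear_eq_on[where f="\<lambda>b. g (t2 a b)" and g="f a" and B=E])
    show "Vector_Spaces.linear sH sV (\<lambda>b. g (t2 a b))" by (rule lin_comp[OF lt1 lg])
    show "Vector_Spaces.linear sH sV (f a)" by (rule lf1)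
    show "b \<in> H.span E" using E(2) by blast
    show "\<And>b. b \<in> E \<Longrightarrow> g (t2 a b) = f a b" using gE that by blast
  qed
  have step2: "g (t2 a b) = f a b" for a b
  proof (rule pHV.linear_eq_on[where f="\<lambda>a. g (t2 a b)" and g="\<lambda>a. f a b" and B=E])
    show "Vector_Spaces.linear sH sV (\<lambda>a. g (t2 a b))" by (rule lin_comp[OF lt2 lg])
    show "Vector_Spaces.linear sH sV (\<lambda>a. f a b)" by (rule lf2)
    show "a \<in> H.span E" using E(2) by blast
    show "\<And>a. a \<in> E \<Longrightarrow> g (t2 a b) = f a b" using step1 by blast
  qed
  show ?thesis using lg step2 by blast
qed

lemma lift2_props:
  assumes "is_tensor2 sH s2 t2" "vector_space sV" "bilinear_map sH sV f"
  shows "Vector_Spaces.linear s2 sV (lift2 s2 sV t2 f)" "lift2 s2 sV t2 f (t2 a b) = f a b"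
proof -
  have "\<exists>g. Vector_Spaces.linear s2 sV g \<and> (\<forall>a b. g (t2 a b) = f a b)"
    by (rule lift2_ex[OF assms])
  then have "Vector_Spaces.linear s2 sV (lift2 s2 sV t2 f) \<and> (\<forall>a b. lift2 s2 sV t2 f (t2 a b) = f a b)"
    unfolding lift2_def by (rule someI_ex)
  then show "Vector_Spaces.linear s2 sV (lift2 s2 sV t2 f)" "lift2 s2 sV t2 f (t2 a b) = f a b" by auto
qed

lemma lift3_ex:
  assumes T: "is_tensor3 sH s3 t3" and V: "vector_space sV" and f: "trilinear_map sH sV f"
  shows "\<exists>g. Vector_Spaces.linear s3 sV g \<and> (\<forall>a b c. g (t3 a b c) = f a b c)"
proof -
  have vH: "vector_space sH" and v3: "vector_space s3" and bt: "trilinear_map sH s3 t3"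
    and indep: "\<And>B C D. \<not> module.dependent sH B \<Longrightarrow> \<not> module.dependent sH C \<Longrightarrow> \<not> module.dependent sH D \<Longrightarrow>
        inj_on (\<lambda>(a, b, c). t3 a b c) (B \<times> C \<times> D) \<and> \<not> module.dependent s3 ((\<lambda>(a, b, c). t3 a b c) ` (B \<times> C \<times> D))"
    using T unfolding is_tensor3_def by blast+
  interpret H: vector_space sH by fact
  interpret p3V: vector_space_pair s3 sV using v3 V by (rule vsp)
  interpret pHV: vector_space_pair sH sV using vH V by (rule vsp)
  obtain E where E: "H.independent E" "UNIV \<subseteq> H.span E"
    using H.basis_exists[of UNIV] by blast
  define P where "P = (\<lambda>(a, b, c). t3 a b c) ` (E \<times> E \<times> E)"
  have inj: "inj_on (\<lambda>(a, b, c). t3 a b c) (E \<times> E \<times> E)" and iP: "\<not> module.dependent s3 P"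
    using indep[OF E(1) E(1) E(1)] by (auto simp: P_def)
  define g where "g = p3V.construct P (\<lambda>v. (\<lambda>(a, b, c). f a b c) (the_inv_into (E \<times> E \<times> E) (\<lambda>(a, b, c). t3 a b c) v))"
  have lg: "Vector_Spaces.linear s3 sV g" unfolding g_def
    by (rule p3V.linear_construct) (use iP in simp)
  have gE: "g (t3 a b c) = f a b c" if "a \<in> E" "b \<in> E" "c \<in> E" for a b c
  proof -
    have "t3 a b c \<in> P" using that by (force simp: P_def)
    then have "g (t3 a b c) = (\<lambda>(a, b, c). f a b c) (the_inv_into (E \<times> E \<times> E) (\<lambda>(a, b, c). t3 a b c) (t3 a b c))"
      unfolding g_def by (subst p3V.construct_basis) (use iP in auto)
    also have "the_inv_into (E \<times> E \<times> E) (\<lambda>(a, b, c). t3 a b c) (t3 a b c) = (a, b, c)"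
      using the_inv_into_f_f[OF inj, of "(a,b,c)"] that by simp
    finally show ?thesis by simp
  qed
  have lt1: "Vector_Spaces.linear sH s3 (t3 a b)" for a b using bt by (simp add: trilinear_map_def)
  have lt2: "Vector_Spaces.linear sH s3 (\<lambda>b. t3 a b c)" for a c using bt by (simp add: trilinear_map_def)
  have lt3: "Vector_Spaces.linear sH s3 (\<lambda>a. t3 a b c)" for b c using bt by (simp add: trilinear_map_def)
  have lf1: "Vector_Spaces.linear sH sV (f a b)" for a b using f by (simp add: trilinear_map_def)
  have lf2: "Vector_Spaces.linear sH sV (\<lambda>b. f a b c)" for a c using f by (simp add: trilinear_map_def)
  have lf3: "Vector_Spaces.linear sH sV (\<lambda>a. f a b c)" for b c using f by (simp add: trilinear_map_def)
  have step1: "g (t3 a b c) = f a b c" if "a \<in> E" "b \<in> E" for a b c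
  proof (rule pHV.linear_eq_on[where f="\<lambda>c. g (t3 a b c)" and g="f a b" and B=E])
    show "Vector_Spaces.linear sH sV (\<lambda>c. g (t3 a b c))" by (rule lin_comp[OF lt1 lg])
    show "Vector_Spaces.linear sH sV (f a b)" by (rule lf1)
    show "c \<in> H.span E" using E(2) by blast
    show "\<And>c. c \<in> E \<Longrightarrow> g (t3 a b c) = f a b c" using gE that by blast
  qed
  have step2: "g (t3 a b c) = f a b c" if "a \<in> E" for a b c
  proof (rule pHV.linear_eq_on[where f="\<lambda>b. g (t3 a b c)" and g="\<lambda>b. f a b c" and B=E])
    show "Vector_Spaces.linear sH sV (\<lambda>b. g (t3 a b c))" by (rule lin_comp[OF lt2 lg])
    show "Vector_Spaces.linear sH sV (\<lambda>b. f a b c)" by (rule lf2)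
    show "b \<in> H.span E" using E(2) by blast
    show "\<And>b. b \<in> E \<Longrightarrow> g (t3 a b c) = f a b c" using step1 that by blast
  qed
  have step3: "g (t3 a b c) = f a b c" for a b c
  proof (rule pHV.linear_eq_on[where f="\<lambda>a. g (t3 a b c)" and g="\<lambda>a. f a b c" and B=E])
    show "Vector_Spaces.linear sH sV (\<lambda>a. g (t3 a b c))" by (rule lin_comp[OF lt3 lg])
    show "Vector_Spaces.linear sH sV (\<lambda>a. f a b c)" by (rule lf3)
    show "a \<in> H.span E" using E(2) by blast
    show "\<And>a. a \<in> E \<Longrightarrow> g (t3 a b c) = f a b c" using step2 by blast
  qed
  show ?thesis using lg step3 by blast
qed

lemma lift3_props:
  assumes "is_tensor3 sH s3 t3" "vector_space sV" "trilinear_map sH sV f"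
  shows "Vector_Spaces.linear s3 sV (lift3 s3 sV t3 f)" "lift3 s3 sV t3 f (t3 a b c) = f a b c"
proof -
  have "\<exists>g. Vector_Spaces.linear s3 sV g \<and> (\<forall>a b c. g (t3 a b c) = f a b c)"
    by (rule lift3_ex[OF assms])
  then have "Vector_Spaces.linear s3 sV (lift3 s3 sV t3 f) \<and> (\<forall>a b c. lift3 s3 sV t3 f (t3 a b c) = f a b c)"
    unfolding lift3_def by (rule someI_ex)
  then show "Vector_Spaces.linear s3 sV (lift3 s3 sV t3 f)" "lift3 s3 sV t3 f (t3 a b c) = f a b c" by auto
qed



lemma lin_sum_fun: "vector_space s1 \<Longrightarrow> vector_space s2 \<Longrightarrow> (\<And>i. i \<in> I \<Longrightarrow> Vector_Spaces.linear s1 s2 (g i))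
  \<Longrightarrow> Vector_Spaces.linear s1 s2 (\<lambda>x. \<Sum>i\<in>I. g i x)"
proof (rule linI)
  assume a: "vector_space s2" "\<And>i. i \<in> I \<Longrightarrow> Vector_Spaces.linear s1 s2 (g i)"
  show "(\<Sum>i\<in>I. g i (x + y)) = (\<Sum>i\<in>I. g i x) + (\<Sum>i\<in>I. g i y)" for x y
  proof -
    have "(\<Sum>i\<in>I. g i (x + y)) = (\<Sum>i\<in>I. g i x + g i y)"
      by (rule sum.cong[OF refl]) (use lin_add[OF a(2)] in blast)
    then show ?thesis by (simp add: sum.distrib)
  qed
  show "(\<Sum>i\<in>I. g i (s1 c x)) = s2 c (\<Sum>i\<in>I. g i x)" for c x
  proof -
    have "(\<Sum>i\<in>I. g i (s1 c x)) = (\<Sum>i\<in>I. s2 c (g i x))"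
      by (rule sum.cong[OF refl]) (use lin_scale[OF a(2)] in blast)
    then show ?thesis by (simp add: module.scale_sum_right module_iff_vector_space a(1))
  qed
qed

locale SQT =
  fixes sH :: "'k::field \<Rightarrow> 'h::ring_1 \<Rightarrow> 'h"
    and s2 :: "'k \<Rightarrow> 'hh::ring_1 \<Rightarrow> 'hh" and t2 :: "'h \<Rightarrow> 'h \<Rightarrow> 'hh"
    and s3 :: "'k \<Rightarrow> 'hhh::ring_1 \<Rightarrow> 'hhh" and t3 :: "'h \<Rightarrow> 'h \<Rightarrow> 'h \<Rightarrow> 'hhh"
    and \<Delta> :: "'h \<Rightarrow> 'hh" and \<epsilon> :: "'h \<Rightarrow> 'k" and S :: "'h \<Rightarrow> 'h" and R :: 'hh
  assumes sqt: "semiquasitriangular sH s2 t2 s3 t3 \<Delta> \<epsilon> S R"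
begin

lemma hopf: "hopf_algebra sH s2 t2 s3 t3 \<Delta> \<epsilon> S"
  using sqt unfolding semiquasitriangular_def by blast

lemma kH: "k_algebra sH" using hopf unfolding hopf_algebra_def by blast
lemma TA2: "tensor_algebra2 sH s2 t2" using hopf unfolding hopf_algebra_def by blast
lemma TA3: "tensor_algebra3 sH s3 t3" using hopf unfolding hopf_algebra_def by blast
lemma T2: "is_tensor2 sH s2 t2" using TA2 unfolding tensor_algebra2_def by blast
lemma T3: "is_tensor3 sH s3 t3" using TA3 unfolding tensor_algebra3_def by blast
lemma vH: "vector_space sH" using kH unfolding k_algebra_def by blast
lemma v2: "vector_space s2" using T2 unfolding is_tensor2_def by blast
lemma v3: "vector_space s3" using T3 unfolding is_tensor3_def by blast
lemma k2: "k_algebra s2" using TA2 unfolding tensor_algebra2_def by blast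
lemma t2_mult: "t2 a b * t2 c d = t2 (a * c) (b * d)" using TA2 unfolding tensor_algebra2_def by blast
lemma t2_one: "t2 1 1 = 1" using TA2 unfolding tensor_algebra2_def by blast
lemma bil_t2: "bilinear_map sH s2 t2" using T2 unfolding is_tensor2_def by blast
lemma tril_t3: "trilinear_map sH s3 t3" using T3 unfolding is_tensor3_def by blast
lemma span2: "module.span s2 (range (case_prod t2)) = UNIV" using T2 unfolding is_tensor2_def by blast

lemma lin\<Delta>: "Vector_Spaces.linear sH s2 \<Delta>" using hopf unfolding hopf_algebra_def by blast
lemma \<Delta>_one: "\<Delta> 1 = 1" using hopf unfolding hopf_algebra_def by blast
lemma \<Delta>_mult: "\<Delta> (x * y) = \<Delta> x * \<Delta> y" using hopf unfolding hopf_algebra_def by blast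
lemma lin\<epsilon>: "Vector_Spaces.linear sH (*) \<epsilon>" using hopf unfolding hopf_algebra_def by blast
lemma \<epsilon>_one: "\<epsilon> 1 = 1" using hopf unfolding hopf_algebra_def by blast
lemma \<epsilon>_mult: "\<epsilon> (x * y) = \<epsilon> x * \<epsilon> y" using hopf unfolding hopf_algebra_def by blast
lemma coassoc: "delta_id s2 s3 t2 t3 \<Delta> (\<Delta> h) = id_delta s2 s3 t2 t3 \<Delta> (\<Delta> h)"
  using hopf unfolding hopf_algebra_def by blast
lemma counitL: "lift2 s2 sH t2 (\<lambda>a b. sH (\<epsilon> a) b) (\<Delta> h) = h"
  using hopf unfolding hopf_algebra_def by blast
lemma counitR: "lift2 s2 sH t2 (\<lambda>a b. sH (\<epsilon> b) a) (\<Delta> h) = h"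
  using hopf unfolding hopf_algebra_def by blast
lemma linS: "Vector_Spaces.linear sH sH S" using hopf unfolding hopf_algebra_def by blast
lemma antipodeL: "lift2 s2 sH t2 (\<lambda>a b. S a * b) (\<Delta> h) = sH (\<epsilon> h) 1"
  using hopf unfolding hopf_algebra_def by blast
lemma antipodeR: "lift2 s2 sH t2 (\<lambda>a b. a * S b) (\<Delta> h) = sH (\<epsilon> h) 1"
  using hopf unfolding hopf_algebra_def by blast
lemma bijS: "bij S" using sqt unfolding semiquasitriangular_def by blast
lemma Rinv_ex: "\<exists>R'. R * R' = 1 \<and> R' * R = 1" using sqt unfolding semiquasitriangular_def by blast

lemma ax1: "lift2 s2 s3 t2 (\<lambda>a b. lift2 s2 s3 t2 (\<lambda>c d. t3 c d b) (\<Delta> a)) R =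
       lift2 s2 s3 t2 (\<lambda>a b. lift2 s2 s3 t2 (\<lambda>c d. t3 a c (b * d)) R) R"
  using sqt unfolding semiquasitriangular_def by blast
lemma ax2: "lift2 s2 s3 t2 (\<lambda>a b. lift2 s2 s3 t2 (\<lambda>c d. t3 a c d) (\<Delta> b)) R =
       lift2 s2 s3 t2 (\<lambda>a b. lift2 s2 s3 t2 (\<lambda>c d. t3 (a * c) d b) R) R"
  using sqt unfolding semiquasitriangular_def by blast
lemma ax3: "lift2 s2 s3 t2 (\<lambda>a b. lift2 s2 s3 t2 (\<lambda>b1 b2.
         lift2 s2 s3 t2 (\<lambda>c d. t3 a (b2 * c) (b1 * d)) R) (\<Delta> b)) R =
       lift2 s2 s3 t2 (\<lambda>a b. lift2 s2 s3 t2 (\<lambda>b1 b2.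
         lift2 s2 s3 t2 (\<lambda>c d. t3 a (c * b1) (d * b2)) R) (\<Delta> b)) R"
  using sqt unfolding semiquasitriangular_def by blast
lemma ax4: "lift2 s2 s3 t2 (\<lambda>a b. lift2 s2 s3 t2 (\<lambda>a1 a2.
         lift2 s2 s3 t2 (\<lambda>c d. t3 (a2 * c) (a1 * d) b) R) (\<Delta> a)) R =
       lift2 s2 s3 t2 (\<lambda>a b. lift2 s2 s3 t2 (\<lambda>a1 a2.
         lift2 s2 s3 t2 (\<lambda>c d. t3 (c * a1) (d * a2) b) R) (\<Delta> a)) R"
  using sqt unfolding semiquasitriangular_def by blast

lemma vK: "vector_space ((*) :: 'k \<Rightarrow> 'k \<Rightarrow> 'k)" using lin_vs2[OF lin\<epsilon>] .

lemma kH': "\<forall>c x y. sH c (x * y) = sH c x * y \<and> sH c (x * y) = x * sH c y"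
  using kH unfolding k_algebra_def by blast
lemma k2': "\<forall>c x y. s2 c (x * y) = s2 c x * y \<and> s2 c (x * y) = x * s2 c y"
  using k2 unfolding k_algebra_def by blast
lemma sH_multL: "sH c x * y = sH c (x * y)" using kH' by simp
lemma sH_multR: "x * sH c y = sH c (x * y)" using kH' by (metis (no_types))
lemma s2_multL: "s2 c x * y = s2 c (x * y)" using k2' by simp
lemma s2_multR: "x * s2 c y = s2 c (x * y)" using k2' by (metis (no_types))

lemma lt2R: "Vector_Spaces.linear sH s2 (t2 a)" using bil_t2 unfolding bilinear_map_def by blast
lemma lt2L: "Vector_Spaces.linear sH s2 (\<lambda>x. t2 x b)" using bil_t2 unfolding bilinear_map_def by blast
lemma lt3_3: "Vector_Spaces.linear sH s3 (t3 a b)" using tril_t3 unfolding trilinear_map_def by blast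
lemma lt3_2: "Vector_Spaces.linear sH s3 (\<lambda>x. t3 a x c)" using tril_t3 unfolding trilinear_map_def by blast
lemma lt3_1: "Vector_Spaces.linear sH s3 (\<lambda>x. t3 x b c)" using tril_t3 unfolding trilinear_map_def by blast

lemma t2_addL: "t2 (x + y) b = t2 x b + t2 y b" using lin_add[OF lt2L[of b]] by simp
lemma t2_addR: "t2 a (x + y) = t2 a x + t2 a y" using lin_add[OF lt2R[of a]] by simp
lemma t2_scaleL: "t2 (sH c x) b = s2 c (t2 x b)" using lin_scale[OF lt2L[of b]] by simp
lemma t2_scaleR: "t2 a (sH c x) = s2 c (t2 a x)" using lin_scale[OF lt2R[of a]] by simp
lemma t2_sumL: "t2 (sum g I) b = (\<Sum>i\<in>I. t2 (g i) b)" using lin_sum[OF lt2L[of b]] by simp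
lemma t2_sumR: "t2 a (sum g I) = (\<Sum>i\<in>I. t2 a (g i))" using lin_sum[OF lt2R[of a]] by simp
lemma t2_0L: "t2 0 b = 0" using lin_0[OF lt2L[of b]] by simp
lemma t2_0R: "t2 a 0 = 0" using lin_0[OF lt2R[of a]] by simp
lemma t2_diffL: "t2 (x - y) b = t2 x b - t2 y b" using lin_diff[OF lt2L[of b]] by simp
lemma t2_diffR: "t2 a (x - y) = t2 a x - t2 a y" using lin_diff[OF lt2R[of a]] by simp
lemma t2_negL: "t2 (- x) b = - t2 x b" using lin_neg[OF lt2L[of b]] by simp
lemma t2_negR: "t2 a (- x) = - t2 a x" using lin_neg[OF lt2R[of a]] by simp

lemma t3_add1: "t3 (x + y) b c = t3 x b c + t3 y b c" using lin_add[OF lt3_1[of b c]] by simp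
lemma t3_add2: "t3 a (x + y) c = t3 a x c + t3 a y c" using lin_add[OF lt3_2[of a c]] by simp
lemma t3_add3: "t3 a b (x + y) = t3 a b x + t3 a b y" using lin_add[OF lt3_3[of a b]] by simp
lemma t3_scale1: "t3 (sH k x) b c = s3 k (t3 x b c)" using lin_scale[OF lt3_1[of b c]] by simp
lemma t3_scale2: "t3 a (sH k x) c = s3 k (t3 a x c)" using lin_scale[OF lt3_2[of a c]] by simp
lemma t3_scale3: "t3 a b (sH k x) = s3 k (t3 a b x)" using lin_scale[OF lt3_3[of a b]] by simp
lemma t3_sum1: "t3 (sum g I) b c = (\<Sum>i\<in>I. t3 (g i) b c)" using lin_sum[OF lt3_1[of b c]] by simp
lemma t3_sum2: "t3 a (sum g I) c = (\<Sum>i\<in>I. t3 a (g i) c)" using lin_sum[OF lt3_2[of a c]] by simp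
lemma t3_sum3: "t3 a b (sum g I) = (\<Sum>i\<in>I. t3 a b (g i))" using lin_sum[OF lt3_3[of a b]] by simp

lemma S_add: "S (x + y) = S x + S y" using linS by (rule lin_add)
lemma S_scale: "S (sH c x) = sH c (S x)" using linS by (rule lin_scale)
lemma S_sum: "S (sum g I) = (\<Sum>i\<in>I. S (g i))" using linS by (rule lin_sum)
lemma S_0: "S 0 = 0" using linS by (rule lin_0)
lemma S_diff: "S (x - y) = S x - S y" using linS by (rule lin_diff)
lemma \<Delta>_add: "\<Delta> (x + y) = \<Delta> x + \<Delta> y" using lin\<Delta> by (rule lin_add)
lemma \<Delta>_scale: "\<Delta> (sH c x) = s2 c (\<Delta> x)" using lin\<Delta> by (rule lin_scale)
lemma \<Delta>_sum: "\<Delta> (sum g I) = (\<Sum>i\<in>I. \<Delta> (g i))" using lin\<Delta> by (rule lin_sum)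
lemma \<Delta>_diff: "\<Delta> (x - y) = \<Delta> x - \<Delta> y" using lin\<Delta> by (rule lin_diff)
lemma \<epsilon>_add: "\<epsilon> (x + y) = \<epsilon> x + \<epsilon> y" using lin\<epsilon> by (rule lin_add)
lemma \<epsilon>_scale: "\<epsilon> (sH c x) = c * \<epsilon> x" using lin\<epsilon> by (rule lin_scale)
lemma \<epsilon>_sum: "\<epsilon> (sum g I) = (\<Sum>i\<in>I. \<epsilon> (g i))" using lin\<epsilon> by (rule lin_sum)

lemma mH: "module sH" using vH by (simp add: module_iff_vector_space)
lemma m2: "module s2" using v2 by (simp add: module_iff_vector_space)
lemma m3: "module s3" using v3 by (simp add: module_iff_vector_space)
lemmas H_vs = module.scale_right_distrib[OF mH] module.scale_left_distrib[OF mH]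
   module.scale_scale[OF mH] module.scale_one[OF mH] module.scale_sum_right[OF mH]
   module.scale_zero_left[OF mH] module.scale_zero_right[OF mH]
lemmas HH_vs = module.scale_right_distrib[OF m2] module.scale_left_distrib[OF m2]
   module.scale_scale[OF m2] module.scale_one[OF m2] module.scale_sum_right[OF m2]
   module.scale_zero_left[OF m2] module.scale_zero_right[OF m2]
lemmas HHH_vs = module.scale_right_distrib[OF m3] module.scale_left_distrib[OF m3]
   module.scale_scale[OF m3] module.scale_one[OF m3] module.scale_sum_right[OF m3]
   module.scale_zero_left[OF m3] module.scale_zero_right[OF m3]

lemmas lsimps = sH_multL sH_multR s2_multL s2_multR t2_addL t2_addR t2_scaleL t2_scaleR
  t3_add1 t3_add2 t3_add3 t3_scale1 t3_scale2 t3_scale3 S_add S_scale \<Delta>_add \<Delta>_scale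
  \<epsilon>_add \<epsilon>_scale distrib_left distrib_right H_vs HH_vs HHH_vs

lemma rep_ex: "\<exists>(n::nat) A B. y = (\<Sum>i<n. t2 (A i) (B i))"
proof -
  interpret M: vector_space s2 by (rule v2)
  have "y \<in> M.span (range (case_prod t2))" using span2 by simp
  then obtain T u where T: "finite T" "T \<subseteq> range (case_prod t2)" "(\<Sum>v\<in>T. s2 (u v) v) = y"
    unfolding M.span_explicit by blast
  obtain xs where xs: "set xs = T" "distinct xs" using finite_distinct_list[OF T(1)] by blast
  have pick: "\<forall>v\<in>T. \<exists>a b. v = t2 a b" 
  proof
    fix v assume "v \<in> T"
    then have "v \<in> range (case_prod t2)" using T(2) by blast
    then obtain q where "v = case_prod t2 q" by blast
    then show "\<exists>a b. v = t2 a b" by (cases q) auto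
  qed
  then obtain pa pb where pq: "\<And>v. v \<in> T \<Longrightarrow> v = t2 (pa v) (pb v)" by metis
  define A where "A i = sH (u (xs ! i)) (pa (xs ! i))" for i
  define B where "B i = pb (xs ! i)" for i
  have "y = (\<Sum>v\<in>T. s2 (u v) v)" using T by simp
  also have "\<dots> = (\<Sum>i<length xs. s2 (u (xs ! i)) (xs ! i))"
  proof -
    have "(\<Sum>v\<in>T. s2 (u v) v) = sum_list (map (\<lambda>v. s2 (u v) v) xs)"
      by (simp add: xs(1)[symmetric] sum.distinct_set_conv_list[OF xs(2)])
    also have "\<dots> = (\<Sum>i<length xs. s2 (u (xs ! i)) (xs ! i))"
      by (simp add: sum_list_sum_nth atLeast0LessThan)
    finally show ?thesis .
  qed
  also have "\<dots> = (\<Sum>i<length xs. t2 (A i) (B i))"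
  proof (rule sum.cong[OF refl])
    fix i assume "i \<in> {..<length xs}"
    then have "xs ! i \<in> T" using xs by auto
    then have e: "xs ! i = t2 (pa (xs ! i)) (pb (xs ! i))" by (rule pq)
    have "s2 (u (xs ! i)) (xs ! i) = s2 (u (xs ! i)) (t2 (pa (xs ! i)) (pb (xs ! i)))"
      by (rule arg_cong[where f="s2 (u (xs ! i))", OF e])
    then show "s2 (u (xs ! i)) (xs ! i) = t2 (A i) (B i)"
      unfolding A_def B_def t2_scaleL .
  qed
  finally show ?thesis by blast
qed

definition rep :: "'hh \<Rightarrow> nat \<times> (nat \<Rightarrow> 'h) \<times> (nat \<Rightarrow> 'h)" where
  "rep y = (SOME r. y = (\<Sum>i<fst r. t2 (fst (snd r) i) (snd (snd r) i)))"
definition "rN y = fst (rep y)"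
definition "rA y = fst (snd (rep y))"
definition "rB y = snd (snd (rep y))"

lemma rep_eq: "y = (\<Sum>i<rN y. t2 (rA y i) (rB y i))"
proof -
  obtain n :: nat and A B where nAB: "y = (\<Sum>i<n. t2 (A i) (B i))" using rep_ex by blast
  have ex: "\<exists>r::nat \<times> (nat \<Rightarrow> 'h) \<times> (nat \<Rightarrow> 'h). y = (\<Sum>i<fst r. t2 (fst (snd r) i) (snd (snd r) i))"
    apply (rule exI[where x="(n, A, B)"])
    apply (simp only: fst_conv snd_conv)
    apply (rule nAB)
    done
  have "y = (\<Sum>i<fst (rep y). t2 (fst (snd (rep y)) i) (snd (snd (rep y)) i))"
    unfolding rep_def by (rule someI_ex[OF ex])
  then show ?thesis unfolding rN_def rA_def rB_def .
qed

definition sw :: "('h \<Rightarrow> 'h \<Rightarrow> 'v) \<Rightarrow> 'hh \<Rightarrow> 'v::ab_group_add" where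
  "sw f y = (\<Sum>i<rN y. f (rA y i) (rB y i))"

lemma lift2_lin: "vector_space sV \<Longrightarrow> bilinear_map sH sV f \<Longrightarrow> Vector_Spaces.linear s2 sV (lift2 s2 sV t2 f)"
  by (rule lift2_props(1)[OF T2])
lemma lift2_t2: "vector_space sV \<Longrightarrow> bilinear_map sH sV f \<Longrightarrow> lift2 s2 sV t2 f (t2 a b) = f a b"
  by (rule lift2_props(2)[OF T2])
lemma lift3_lin: "vector_space sV \<Longrightarrow> trilinear_map sH sV f \<Longrightarrow> Vector_Spaces.linear s3 sV (lift3 s3 sV t3 f)"
  by (rule lift3_props(1)[OF T3])
lemma lift3_t3: "vector_space sV \<Longrightarrow> trilinear_map sH sV f \<Longrightarrow> lift3 s3 sV t3 f (t3 a b c) = f a b c"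
  by (rule lift3_props(2)[OF T3])

lemma lift2_rep: assumes "vector_space sV" "bilinear_map sH sV f" "y = (\<Sum>i\<in>I. t2 (A i) (B i))"
  shows "lift2 s2 sV t2 f y = (\<Sum>i\<in>I. f (A i) (B i))"
  using assms by (simp add: lin_sum[OF lift2_lin] lift2_t2)

lemma sw_lift2: assumes "vector_space sV" "bilinear_map sH sV f"
  shows "lift2 s2 sV t2 f y = sw f y"
  unfolding sw_def by (rule lift2_rep[OF assms rep_eq])

lemma sw_rep: assumes "vector_space sV" "bilinear_map sH sV f" "y = (\<Sum>i\<in>I. t2 (A i) (B i))"
  shows "sw f y = (\<Sum>i\<in>I. f (A i) (B i))"
  using lift2_rep[OF assms] sw_lift2[OF assms(1,2)] by simp

lemma sw_lin: assumes "vector_space sV" "bilinear_map sH sV f"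
  shows "Vector_Spaces.linear s2 sV (sw f)"
proof -
  have eq: "lift2 s2 sV t2 f = sw f" using sw_lift2[OF assms] by (simp add: fun_eq_iff)
  show ?thesis using lift2_lin[OF assms] eq by (rule back_subst)
qed

end


context SQT begin

lemma bilI: "(\<And>a. Vector_Spaces.linear sH sV (f a)) \<Longrightarrow> (\<And>b. Vector_Spaces.linear sH sV (\<lambda>a. f a b))
   \<Longrightarrow> bilinear_map sH sV f"
  by (simp add: bilinear_map_def)
lemma trilI: "(\<And>a b. Vector_Spaces.linear sH sV (f a b)) \<Longrightarrow> (\<And>a c. Vector_Spaces.linear sH sV (\<lambda>b. f a b c))
   \<Longrightarrow> (\<And>b c. Vector_Spaces.linear sH sV (\<lambda>a. f a b c)) \<Longrightarrow> trilinear_map sH sV f"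
  by (simp add: trilinear_map_def)

lemma bil1: "bilinear_map sH sV f \<Longrightarrow> Vector_Spaces.linear sH sV (f a)" by (simp add: bilinear_map_def)
lemma bil2: "bilinear_map sH sV f \<Longrightarrow> Vector_Spaces.linear sH sV (\<lambda>a. f a b)" by (simp add: bilinear_map_def)
lemma tril1: "trilinear_map sH sV f \<Longrightarrow> Vector_Spaces.linear sH sV (\<lambda>a. f a b c)" by (simp add: trilinear_map_def)
lemma tril2: "trilinear_map sH sV f \<Longrightarrow> Vector_Spaces.linear sH sV (\<lambda>b. f a b c)" by (simp add: trilinear_map_def)
lemma tril3: "trilinear_map sH sV f \<Longrightarrow> Vector_Spaces.linear sH sV (f a b)" by (simp add: trilinear_map_def)

lemma lin_sw_arg: "vector_space sV \<Longrightarrow> bilinear_map sH sV f \<Longrightarrow> Vector_Spaces.linear sH s2 g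
  \<Longrightarrow> Vector_Spaces.linear sH sV (\<lambda>x. sw f (g x))"
  by (rule lin_comp[OF _ sw_lin])

lemma lin_sw_par: "vector_space sV \<Longrightarrow> vector_space sW \<Longrightarrow> (\<And>a b. Vector_Spaces.linear sW sV (\<lambda>z. f z a b))
  \<Longrightarrow> Vector_Spaces.linear sW sV (\<lambda>z. sw (f z) y)"
  unfolding sw_def by (rule lin_sum_fun) auto

lemma sw_applyL: "Vector_Spaces.linear sV sW L \<Longrightarrow> L (sw f y) = sw (\<lambda>a b. L (f a b)) y"
  unfolding sw_def by (rule lin_sum)

lemma sw_sum: "sw f (sum g I) = (\<Sum>i\<in>I. sw f (g i))" if "vector_space sV" "bilinear_map sH sV f" for f :: "'h \<Rightarrow> 'h \<Rightarrow> 'v::ab_group_add"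
  by (rule lin_sum[OF sw_lin[OF that]])
lemma sw_t2: "vector_space sV \<Longrightarrow> bilinear_map sH sV f \<Longrightarrow> sw f (t2 a b) = f a b"
  using sw_lift2 lift2_t2 by metis

lemma sw_cong: "(\<And>a b. f a b = g a b) \<Longrightarrow> sw f y = sw g y"
  by presburger

lemma sw_add_fun: "sw (\<lambda>a b. f a b + g a b) y = sw f y + sw g y"
  unfolding sw_def by (simp add: sum.distrib)
lemma sw_sum_fun: "sw (\<lambda>a b. \<Sum>i\<in>I. f i a b) y = (\<Sum>i\<in>I. sw (f i) y)"
  unfolding sw_def by (rule sum.swap)
lemma sw_swap: "sw (\<lambda>a b. sw (\<lambda>c d. f a b c d) z) y = sw (\<lambda>c d. sw (\<lambda>a b. f a b c d) y) z"
  unfolding sw_def by (rule sum.swap)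
lemma sw_multL: "(x::'r::ring) * sw f y = sw (\<lambda>a b. x * f a b) y"
  unfolding sw_def by (simp add: sum_distrib_left)
lemma sw_multR: "sw f y * (x::'r::ring) = sw (\<lambda>a b. f a b * x) y"
  unfolding sw_def by (simp add: sum_distrib_right)

lemma lin_multL: "Vector_Spaces.linear sH sH (\<lambda>x. c * x)"
  by (rule linI[OF vH vH]) (simp_all add: lsimps)
lemma lin_multR: "Vector_Spaces.linear sH sH (\<lambda>x. x * c)"
  by (rule linI[OF vH vH]) (simp_all add: lsimps)
lemma lin2_multL: "Vector_Spaces.linear s2 s2 (\<lambda>x. c * x)"
  by (rule linI[OF v2 v2]) (simp_all add: lsimps)
lemma lin2_multR: "Vector_Spaces.linear s2 s2 (\<lambda>x. x * c)"
  by (rule linI[OF v2 v2]) (simp_all add: lsimps)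

lemma bil_counitL: "bilinear_map sH sH (\<lambda>a b. sH (\<epsilon> a) b)"
  by (rule bilI; rule linI[OF vH vH]) (simp_all add: lsimps mult.commute)
lemma bil_counitR: "bilinear_map sH sH (\<lambda>a b. sH (\<epsilon> b) a)"
  by (rule bilI; rule linI[OF vH vH]) (simp_all add: lsimps mult.commute)
lemma bil_antL: "bilinear_map sH sH (\<lambda>a b. S a * b)"
  by (rule bilI; rule linI[OF vH vH]) (simp_all add: lsimps)
lemma bil_antR: "bilinear_map sH sH (\<lambda>a b. a * S b)"
  by (rule bilI; rule linI[OF vH vH]) (simp_all add: lsimps)

lemma counitL_sw: "sw (\<lambda>a b. sH (\<epsilon> a) b) (\<Delta> h) = h"
  using counitL sw_lift2[OF vH bil_counitL] by simp
lemma counitR_sw: "sw (\<lambda>a b. sH (\<epsilon> b) a) (\<Delta> h) = h"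
  using counitR sw_lift2[OF vH bil_counitR] by simp
lemma antipodeL_sw: "sw (\<lambda>a b. S a * b) (\<Delta> h) = sH (\<epsilon> h) 1"
  using antipodeL sw_lift2[OF vH bil_antL] by simp
lemma antipodeR_sw: "sw (\<lambda>a b. a * S b) (\<Delta> h) = sH (\<epsilon> h) 1"
  using antipodeR sw_lift2[OF vH bil_antR] by simp

lemma bil_t3_1: "bilinear_map sH s3 (\<lambda>c d. t3 c d b)"
  by (rule bilI; rule linI[OF vH v3]) (simp_all add: lsimps)
lemma bil_t3_2: "bilinear_map sH s3 (\<lambda>c d. t3 a c d)"
  by (rule bilI; rule linI[OF vH v3]) (simp_all add: lsimps)

lemma bil_swD1:
  assumes V: "vector_space sV" and G: "\<And>b. bilinear_map sH sV (\<lambda>c d. G c d b)"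
    and G3: "\<And>c d. Vector_Spaces.linear sH sV (G c d)"
  shows "bilinear_map sH sV (\<lambda>a b. sw (\<lambda>c d. G c d b) (\<Delta> a))"
proof (rule bilI)
  show "Vector_Spaces.linear sH sV (\<lambda>b. sw (\<lambda>c d. G c d b) (\<Delta> a))" for a
    by (rule lin_sw_par[OF V vH G3])
  show "Vector_Spaces.linear sH sV (\<lambda>a. sw (\<lambda>c d. G c d b) (\<Delta> a))" for b
    by (rule lin_sw_arg[OF V G lin\<Delta>])
qed

lemma bil_swD2:
  assumes V: "vector_space sV" and G: "\<And>a. bilinear_map sH sV (G a)"
    and G1: "\<And>c d. Vector_Spaces.linear sH sV (\<lambda>a. G a c d)"
  shows "bilinear_map sH sV (\<lambda>a b. sw (G a) (\<Delta> b))"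
proof (rule bilI)
  show "Vector_Spaces.linear sH sV (\<lambda>b. sw (G a) (\<Delta> b))" for a
    by (rule lin_sw_arg[OF V G lin\<Delta>])
  show "Vector_Spaces.linear sH sV (\<lambda>a. sw (G a) (\<Delta> b))" for b
    by (rule lin_sw_par[OF V vH G1])
qed

lemma coassoc_F:
  assumes V: "vector_space sV" and F: "trilinear_map sH sV F"
  shows "sw (\<lambda>a b. sw (\<lambda>c d. F c d b) (\<Delta> a)) (\<Delta> h) = sw (\<lambda>a b. sw (\<lambda>c d. F a c d) (\<Delta> b)) (\<Delta> h)"
proof -
  let ?L = "lift3 s3 sV t3 F"
  have L: "Vector_Spaces.linear s3 sV ?L" by (rule lift3_lin[OF V F])
  have b1: "bilinear_map sH s3 (\<lambda>a b. sw (\<lambda>c d. t3 c d b) (\<Delta> a))"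
    by (rule bil_swD1[OF v3 bil_t3_1 lt3_3])
  have b2: "bilinear_map sH s3 (\<lambda>a b. sw (\<lambda>c d. t3 a c d) (\<Delta> b))"
    by (rule bil_swD2[OF v3 bil_t3_2 lt3_1])
  have "delta_id s2 s3 t2 t3 \<Delta> (\<Delta> h) = lift2 s2 s3 t2 (\<lambda>a b. sw (\<lambda>c d. t3 c d b) (\<Delta> a)) (\<Delta> h)"
    unfolding delta_id_def by (simp add: sw_lift2[OF v3 bil_t3_1])
  also have "\<dots> = sw (\<lambda>a b. sw (\<lambda>c d. t3 c d b) (\<Delta> a)) (\<Delta> h)"
    by (rule sw_lift2[OF v3 b1])
  finally have e1: "delta_id s2 s3 t2 t3 \<Delta> (\<Delta> h) = sw (\<lambda>a b. sw (\<lambda>c d. t3 c d b) (\<Delta> a)) (\<Delta> h)" .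
  have "id_delta s2 s3 t2 t3 \<Delta> (\<Delta> h) = lift2 s2 s3 t2 (\<lambda>a b. sw (\<lambda>c d. t3 a c d) (\<Delta> b)) (\<Delta> h)"
    unfolding id_delta_def by (simp add: sw_lift2[OF v3 bil_t3_2])
  also have "\<dots> = sw (\<lambda>a b. sw (\<lambda>c d. t3 a c d) (\<Delta> b)) (\<Delta> h)"
    by (rule sw_lift2[OF v3 b2])
  finally have e2: "id_delta s2 s3 t2 t3 \<Delta> (\<Delta> h) = sw (\<lambda>a b. sw (\<lambda>c d. t3 a c d) (\<Delta> b)) (\<Delta> h)" .
  have "?L (delta_id s2 s3 t2 t3 \<Delta> (\<Delta> h)) = ?L (id_delta s2 s3 t2 t3 \<Delta> (\<Delta> h))"
    using coassoc by simp
  then show ?thesis unfolding e1 e2 sw_applyL[OF L] lift3_t3[OF V F] .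
qed

end


context SQT begin

lemmas lsimps2 = lsimps sum.distrib t3_sum1 t3_sum2 t3_sum3 t2_sumL t2_sumR

lemma ax1F:
  assumes V: "vector_space sV" and F: "trilinear_map sH sV F" and Rr: "R = (\<Sum>i\<in>I. t2 (A i) (B i))"
  shows "(\<Sum>i\<in>I. sw (\<lambda>c d. F c d (B i)) (\<Delta> (A i))) = (\<Sum>i\<in>I. \<Sum>j\<in>I. F (A i) (A j) (B i * B j))"
proof -
  let ?L = "lift3 s3 sV t3 F"
  have L: "Vector_Spaces.linear s3 sV ?L" by (rule lift3_lin[OF V F])
  have b1: "bilinear_map sH s3 (\<lambda>a b. sw (\<lambda>c d. t3 c d b) (\<Delta> a))"
    by (rule bil_swD1[OF v3 bil_t3_1 lt3_3])
  have l1: "lift2 s2 s3 t2 (\<lambda>a b. lift2 s2 s3 t2 (\<lambda>c d. t3 c d b) (\<Delta> a)) R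
     = (\<Sum>i\<in>I. sw (\<lambda>c d. t3 c d (B i)) (\<Delta> (A i)))"
    by (simp add: sw_lift2[OF v3 bil_t3_1] lift2_rep[OF v3 b1 Rr])
  have bi: "bilinear_map sH s3 (\<lambda>c d. t3 a c (b * d))" for a b
    by (rule bilI; rule linI[OF vH v3]) (simp_all add: lsimps)
  have inner: "lift2 s2 s3 t2 (\<lambda>c d. t3 a c (b * d)) R = (\<Sum>j\<in>I. t3 a (A j) (b * B j))" for a b
    by (rule lift2_rep[OF v3 bi Rr])
  have bo: "bilinear_map sH s3 (\<lambda>a b. \<Sum>j\<in>I. t3 a (A j) (b * B j))"
    by (rule bilI; rule linI[OF vH v3]) (simp_all add: lsimps2)
  have r1: "lift2 s2 s3 t2 (\<lambda>a b. lift2 s2 s3 t2 (\<lambda>c d. t3 a c (b * d)) R) R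
     = (\<Sum>i\<in>I. \<Sum>j\<in>I. t3 (A i) (A j) (B i * B j))"
    unfolding inner by (rule lift2_rep[OF v3 bo Rr])
  have "?L (\<Sum>i\<in>I. sw (\<lambda>c d. t3 c d (B i)) (\<Delta> (A i))) = ?L (\<Sum>i\<in>I. \<Sum>j\<in>I. t3 (A i) (A j) (B i * B j))"
    using ax1 l1 r1 by simp
  then show ?thesis by (simp add: lin_sum[OF L] sw_applyL[OF L] lift3_t3[OF V F])
qed

lemma ax2F:
  assumes V: "vector_space sV" and F: "trilinear_map sH sV F" and Rr: "R = (\<Sum>i\<in>I. t2 (A i) (B i))"
  shows "(\<Sum>i\<in>I. sw (\<lambda>c d. F (A i) c d) (\<Delta> (B i))) = (\<Sum>i\<in>I. \<Sum>j\<in>I. F (A i * A j) (B j) (B i))"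
proof -
  let ?L = "lift3 s3 sV t3 F"
  have L: "Vector_Spaces.linear s3 sV ?L" by (rule lift3_lin[OF V F])
  have b1: "bilinear_map sH s3 (\<lambda>a b. sw (\<lambda>c d. t3 a c d) (\<Delta> b))"
    by (rule bil_swD2[OF v3 bil_t3_2 lt3_1])
  have l1: "lift2 s2 s3 t2 (\<lambda>a b. lift2 s2 s3 t2 (\<lambda>c d. t3 a c d) (\<Delta> b)) R
     = (\<Sum>i\<in>I. sw (\<lambda>c d. t3 (A i) c d) (\<Delta> (B i)))"
    by (simp add: sw_lift2[OF v3 bil_t3_2] lift2_rep[OF v3 b1 Rr])
  have bi: "bilinear_map sH s3 (\<lambda>c d. t3 (a * c) d b)" for a b
    by (rule bilI; rule linI[OF vH v3]) (simp_all add: lsimps)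
  have inner: "lift2 s2 s3 t2 (\<lambda>c d. t3 (a * c) d b) R = (\<Sum>j\<in>I. t3 (a * A j) (B j) b)" for a b
    by (rule lift2_rep[OF v3 bi Rr])
  have bo: "bilinear_map sH s3 (\<lambda>a b. \<Sum>j\<in>I. t3 (a * A j) (B j) b)"
    by (rule bilI; rule linI[OF vH v3]) (simp_all add: lsimps2)
  have r1: "lift2 s2 s3 t2 (\<lambda>a b. lift2 s2 s3 t2 (\<lambda>c d. t3 (a * c) d b) R) R
     = (\<Sum>i\<in>I. \<Sum>j\<in>I. t3 (A i * A j) (B j) (B i))"
    unfolding inner by (rule lift2_rep[OF v3 bo Rr])
  have "?L (\<Sum>i\<in>I. sw (\<lambda>c d. t3 (A i) c d) (\<Delta> (B i))) = ?L (\<Sum>i\<in>I. \<Sum>j\<in>I. t3 (A i * A j) (B j) (B i))"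
    using ax2 l1 r1 by simp
  then show ?thesis by (simp add: lin_sum[OF L] sw_applyL[OF L] lift3_t3[OF V F])
qed

lemma ax3F:
  assumes V: "vector_space sV" and F: "trilinear_map sH sV F" and Rr: "R = (\<Sum>i\<in>I. t2 (A i) (B i))"
  shows "(\<Sum>i\<in>I. sw (\<lambda>b1 b2. \<Sum>j\<in>I. F (A i) (b2 * A j) (b1 * B j)) (\<Delta> (B i)))
       = (\<Sum>i\<in>I. sw (\<lambda>b1 b2. \<Sum>j\<in>I. F (A i) (A j * b1) (B j * b2)) (\<Delta> (B i)))"
proof -
  let ?L = "lift3 s3 sV t3 F"
  have L: "Vector_Spaces.linear s3 sV ?L" by (rule lift3_lin[OF V F])
  have bi1: "bilinear_map sH s3 (\<lambda>c d. t3 a (b2 * c) (b1 * d))" for a b1 b2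
    by (rule bilI; rule linI[OF vH v3]) (simp_all add: lsimps)
  have bi2: "bilinear_map sH s3 (\<lambda>c d. t3 a (c * b1) (d * b2))" for a b1 b2
    by (rule bilI; rule linI[OF vH v3]) (simp_all add: lsimps)
  have in1: "lift2 s2 s3 t2 (\<lambda>c d. t3 a (b2 * c) (b1 * d)) R = (\<Sum>j\<in>I. t3 a (b2 * A j) (b1 * B j))" for a b1 b2
    by (rule lift2_rep[OF v3 bi1 Rr])
  have in2: "lift2 s2 s3 t2 (\<lambda>c d. t3 a (c * b1) (d * b2)) R = (\<Sum>j\<in>I. t3 a (A j * b1) (B j * b2))" for a b1 b2
    by (rule lift2_rep[OF v3 bi2 Rr])
  have m1: "bilinear_map sH s3 (\<lambda>b1 b2. \<Sum>j\<in>I. t3 a (b2 * A j) (b1 * B j))" for a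
    by (rule bilI; rule linI[OF vH v3]) (simp_all add: lsimps2)
  have m2: "bilinear_map sH s3 (\<lambda>b1 b2. \<Sum>j\<in>I. t3 a (A j * b1) (B j * b2))" for a
    by (rule bilI; rule linI[OF vH v3]) (simp_all add: lsimps2)
  have m1': "Vector_Spaces.linear sH s3 (\<lambda>a. \<Sum>j\<in>I. t3 a (b2 * A j) (b1 * B j))" for b1 b2
    by (rule linI[OF vH v3]) (simp_all add: lsimps2)
  have m2': "Vector_Spaces.linear sH s3 (\<lambda>a. \<Sum>j\<in>I. t3 a (A j * b1) (B j * b2))" for b1 b2
    by (rule linI[OF vH v3]) (simp_all add: lsimps2)
  have o1: "bilinear_map sH s3 (\<lambda>a b. sw (\<lambda>b1 b2. \<Sum>j\<in>I. t3 a (b2 * A j) (b1 * B j)) (\<Delta> b))"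
    by (rule bil_swD2[OF v3 m1 m1'])
  have o2: "bilinear_map sH s3 (\<lambda>a b. sw (\<lambda>b1 b2. \<Sum>j\<in>I. t3 a (A j * b1) (B j * b2)) (\<Delta> b))"
    by (rule bil_swD2[OF v3 m2 m2'])
  have l1: "lift2 s2 s3 t2 (\<lambda>a b. lift2 s2 s3 t2 (\<lambda>b1 b2.
         lift2 s2 s3 t2 (\<lambda>c d. t3 a (b2 * c) (b1 * d)) R) (\<Delta> b)) R
     = (\<Sum>i\<in>I. sw (\<lambda>b1 b2. \<Sum>j\<in>I. t3 (A i) (b2 * A j) (b1 * B j)) (\<Delta> (B i)))"
    unfolding in1 by (simp add: sw_lift2[OF v3 m1] lift2_rep[OF v3 o1 Rr])
  have r1: "lift2 s2 s3 t2 (\<lambda>a b. lift2 s2 s3 t2 (\<lambda>b1 b2.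
         lift2 s2 s3 t2 (\<lambda>c d. t3 a (c * b1) (d * b2)) R) (\<Delta> b)) R
     = (\<Sum>i\<in>I. sw (\<lambda>b1 b2. \<Sum>j\<in>I. t3 (A i) (A j * b1) (B j * b2)) (\<Delta> (B i)))"
    unfolding in2 by (simp add: sw_lift2[OF v3 m2] lift2_rep[OF v3 o2 Rr])
  have "?L (\<Sum>i\<in>I. sw (\<lambda>b1 b2. \<Sum>j\<in>I. t3 (A i) (b2 * A j) (b1 * B j)) (\<Delta> (B i)))
      = ?L (\<Sum>i\<in>I. sw (\<lambda>b1 b2. \<Sum>j\<in>I. t3 (A i) (A j * b1) (B j * b2)) (\<Delta> (B i)))"
    using ax3 l1 r1 by simp
  then show ?thesis by (simp add: lin_sum[OF L] sw_applyL[OF L] lift3_t3[OF V F])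
qed

lemma ax4F:
  assumes V: "vector_space sV" and F: "trilinear_map sH sV F" and Rr: "R = (\<Sum>i\<in>I. t2 (A i) (B i))"
  shows "(\<Sum>i\<in>I. sw (\<lambda>a1 a2. \<Sum>j\<in>I. F (a2 * A j) (a1 * B j) (B i)) (\<Delta> (A i)))
       = (\<Sum>i\<in>I. sw (\<lambda>a1 a2. \<Sum>j\<in>I. F (A j * a1) (B j * a2) (B i)) (\<Delta> (A i)))"
proof -
  let ?L = "lift3 s3 sV t3 F"
  have L: "Vector_Spaces.linear s3 sV ?L" by (rule lift3_lin[OF V F])
  have bi1: "bilinear_map sH s3 (\<lambda>c d. t3 (a2 * c) (a1 * d) b)" for a1 a2 b
    by (rule bilI; rule linI[OF vH v3]) (simp_all add: lsimps)
  have bi2: "bilinear_map sH s3 (\<lambda>c d. t3 (c * a1) (d * a2) b)" for a1 a2 b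
    by (rule bilI; rule linI[OF vH v3]) (simp_all add: lsimps)
  have in1: "lift2 s2 s3 t2 (\<lambda>c d. t3 (a2 * c) (a1 * d) b) R = (\<Sum>j\<in>I. t3 (a2 * A j) (a1 * B j) b)" for a1 a2 b
    by (rule lift2_rep[OF v3 bi1 Rr])
  have in2: "lift2 s2 s3 t2 (\<lambda>c d. t3 (c * a1) (d * a2) b) R = (\<Sum>j\<in>I. t3 (A j * a1) (B j * a2) b)" for a1 a2 b
    by (rule lift2_rep[OF v3 bi2 Rr])
  have m1: "bilinear_map sH s3 (\<lambda>a1 a2. \<Sum>j\<in>I. t3 (a2 * A j) (a1 * B j) b)" for b
    by (rule bilI; rule linI[OF vH v3]) (simp_all add: lsimps2)
  have m2: "bilinear_map sH s3 (\<lambda>a1 a2. \<Sum>j\<in>I. t3 (A j * a1) (B j * a2) b)" for b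
    by (rule bilI; rule linI[OF vH v3]) (simp_all add: lsimps2)
  have m1': "Vector_Spaces.linear sH s3 (\<lambda>b. \<Sum>j\<in>I. t3 (a2 * A j) (a1 * B j) b)" for a1 a2
    by (rule linI[OF vH v3]) (simp_all add: lsimps2)
  have m2': "Vector_Spaces.linear sH s3 (\<lambda>b. \<Sum>j\<in>I. t3 (A j * a1) (B j * a2) b)" for a1 a2
    by (rule linI[OF vH v3]) (simp_all add: lsimps2)
  have o1: "bilinear_map sH s3 (\<lambda>a b. sw (\<lambda>a1 a2. \<Sum>j\<in>I. t3 (a2 * A j) (a1 * B j) b) (\<Delta> a))"
    by (rule bil_swD1[OF v3 m1 m1'])
  have o2: "bilinear_map sH s3 (\<lambda>a b. sw (\<lambda>a1 a2. \<Sum>j\<in>I. t3 (A j * a1) (B j * a2) b) (\<Delta> a))"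
    by (rule bil_swD1[OF v3 m2 m2'])
  have l1: "lift2 s2 s3 t2 (\<lambda>a b. lift2 s2 s3 t2 (\<lambda>a1 a2.
         lift2 s2 s3 t2 (\<lambda>c d. t3 (a2 * c) (a1 * d) b) R) (\<Delta> a)) R
     = (\<Sum>i\<in>I. sw (\<lambda>a1 a2. \<Sum>j\<in>I. t3 (a2 * A j) (a1 * B j) (B i)) (\<Delta> (A i)))"
    unfolding in1 by (simp add: sw_lift2[OF v3 m1] lift2_rep[OF v3 o1 Rr])
  have r1: "lift2 s2 s3 t2 (\<lambda>a b. lift2 s2 s3 t2 (\<lambda>a1 a2.
         lift2 s2 s3 t2 (\<lambda>c d. t3 (c * a1) (d * a2) b) R) (\<Delta> a)) R
     = (\<Sum>i\<in>I. sw (\<lambda>a1 a2. \<Sum>j\<in>I. t3 (A j * a1) (B j * a2) (B i)) (\<Delta> (A i)))"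
    unfolding in2 by (simp add: sw_lift2[OF v3 m2] lift2_rep[OF v3 o2 Rr])
  have "?L (\<Sum>i\<in>I. sw (\<lambda>a1 a2. \<Sum>j\<in>I. t3 (a2 * A j) (a1 * B j) (B i)) (\<Delta> (A i)))
      = ?L (\<Sum>i\<in>I. sw (\<lambda>a1 a2. \<Sum>j\<in>I. t3 (A j * a1) (B j * a2) (B i)) (\<Delta> (A i)))"
    using ax4 l1 r1 by simp
  then show ?thesis by (simp add: lin_sum[OF L] sw_applyL[OF L] lift3_t3[OF V F])
qed

end


context SQT begin

lemma sw_scale_funH: "sw (\<lambda>a b. sH c (f a b)) y = sH c (sw f y)"
  unfolding sw_def by (simp add: H_vs)
lemma sw_scale_fun2: "sw (\<lambda>a b. s2 c (f a b)) y = s2 c (sw f y)"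
  unfolding sw_def by (simp add: HH_vs)
lemma sw_scale_fun3: "sw (\<lambda>a b. s3 c (f a b)) y = s3 c (sw f y)"
  unfolding sw_def by (simp add: HHH_vs)
lemma sw_scale_funK: "sw (\<lambda>a b. (c::'k) * (f a b)) y = c * (sw f y)"
  unfolding sw_def by (simp add: sum_distrib_left)
lemma sw_neg_fun: "sw (\<lambda>a b. - f a b) y = - sw f y"
  unfolding sw_def by (simp add: sum_negf)
lemma sw_diff_fun: "sw (\<lambda>a b. f a b - g a b) y = sw f y - sw g y"
  unfolding sw_def by (simp add: sum_subtractf)
lemma sw_zero_fun: "sw (\<lambda>a b. 0) y = 0"
  unfolding sw_def by simp

lemmas swsimps = sw_add_fun sw_scale_funH sw_scale_fun2 sw_scale_fun3 sw_scale_funK sw_neg_fun sw_diff_fun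
lemmas lsimps3 = lsimps2 swsimps \<epsilon>_mult

lemma sw_sandwich: "sw (\<lambda>a b. P * f a b * (Q::'r::ring)) y = P * sw f y * Q"
  unfolding sw_def by (simp add: sum_distrib_left sum_distrib_right)

lemma sw_prod:
  assumes V: "vector_space sV" and f: "bilinear_map sH sV f"
  shows "sw (\<lambda>c d. sw (\<lambda>c' d'. f (c * c') (d * d')) z') z = sw f (z * z')"
proof -
  have zz: "z * z' = (\<Sum>i<rN z. \<Sum>j<rN z'. t2 (rA z i * rA z' j) (rB z i * rB z' j))"
    apply (subst rep_eq[of z], subst rep_eq[of z'])
    apply (simp add: sum_distrib_left sum_distrib_right t2_mult)
    apply (rule sum.swap)
    done
  have "sw f (z * z') = (\<Sum>i<rN z. \<Sum>j<rN z'. f (rA z i * rA z' j) (rB z i * rB z' j))"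
    unfolding zz by (simp add: sw_sum[OF V f] sw_t2[OF V f])
  then show ?thesis unfolding sw_def by simp
qed

lemma sw_one: assumes V: "vector_space sV" and f: "bilinear_map sH sV f" shows "sw f 1 = f 1 1"
  using sw_t2[OF V f, of 1 1] t2_one by simp

lemma S_one: "S 1 = 1"
proof -
  have "sw (\<lambda>a b. S a * b) (\<Delta> 1) = S 1" unfolding \<Delta>_one by (simp add: sw_one[OF vH bil_antL])
  then show ?thesis using antipodeL_sw[of 1] \<epsilon>_one by (simp add: H_vs)
qed

lemma lin\<epsilon>S: "Vector_Spaces.linear sH (*) (\<lambda>x. \<epsilon> (S x))" by (rule lin_comp[OF linS lin\<epsilon>])

lemma \<epsilon>_S: "\<epsilon> (S h) = \<epsilon> h"
proof -
  have "\<epsilon> (sw (\<lambda>a b. S a * b) (\<Delta> h)) = \<epsilon> (sH (\<epsilon> h) 1)" using antipodeL_sw by simp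
  then have 1: "sw (\<lambda>a b. \<epsilon> (S a) * \<epsilon> b) (\<Delta> h) = \<epsilon> h"
    by (simp add: sw_applyL[OF lin\<epsilon>] \<epsilon>_mult \<epsilon>_scale \<epsilon>_one)
  have "\<epsilon> (S (sw (\<lambda>a b. sH (\<epsilon> b) a) (\<Delta> h))) = \<epsilon> (S h)" using counitR_sw by simp
  then have 2: "sw (\<lambda>a b. \<epsilon> b * \<epsilon> (S a)) (\<Delta> h) = \<epsilon> (S h)"
    by (simp add: sw_applyL[OF lin\<epsilon>S] S_scale \<epsilon>_scale)
  show ?thesis using 1 2 by (simp add: mult.commute)
qed

lemma \<epsilon>_sw: "\<epsilon> (sw (\<lambda>a b. sH (\<epsilon> a) b) y) = sw (\<lambda>a b. \<epsilon> a * \<epsilon> b) y"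
  by (simp add: sw_applyL[OF lin\<epsilon>] \<epsilon>_scale)

end


context SQT begin

lemma S_mult: "S (x * y) = S y * S x"
proof -
  define T where "T a c d a' c' d' = S (a * a') * (c * c') * S d' * S d" for a c d a' c' d'
  define Pid where "Pid a c d = sw (\<lambda>a' b'. sw (\<lambda>c' d'. T a c d a' c' d') (\<Delta> b')) (\<Delta> y)" for a c d
  define Pde where "Pde a c d = sw (\<lambda>a' b'. sw (\<lambda>c' d'. T a c d c' d' b') (\<Delta> a')) (\<Delta> y)" for a c d
  have triT: "trilinear_map sH sH (\<lambda>p q r. T a c d p q r)" for a c d
    unfolding T_def by (rule trilI; rule linI[OF vH vH]) (simp_all add: lsimps3)
  have PP: "Pde a c d = Pid a c d" for a c d
    unfolding Pde_def Pid_def by (rule coassoc_F[OF vH triT])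
  have triP: "trilinear_map sH sH Pde"
    unfolding Pde_def T_def by (rule trilI; rule linI[OF vH vH]) (simp_all add: lsimps3)
  have E: "sw (\<lambda>a b. sw (\<lambda>c d. Pde c d b) (\<Delta> a)) (\<Delta> x) = sw (\<lambda>a b. sw (\<lambda>c d. Pid a c d) (\<Delta> b)) (\<Delta> x)"
    using coassoc_F[OF vH triP, of x] by (simp add: PP)
  have Pid_val: "Pid a c d = S (a * y) * c * S d" for a c d
  proof -
    have in1: "sw (\<lambda>c' d'. T a c d a' c' d') (\<Delta> b') = sH (\<epsilon> b') (S (a * a') * c * S d)" for a' b'
    proof -
      have "sw (\<lambda>c' d'. T a c d a' c' d') (\<Delta> b') = sw (\<lambda>c' d'. (S (a * a') * c) * (c' * S d') * S d) (\<Delta> b')"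
        unfolding T_def by (simp add: mult.assoc)
      also have "\<dots> = (S (a * a') * c) * sw (\<lambda>c' d'. c' * S d') (\<Delta> b') * S d" by (rule sw_sandwich)
      also have "\<dots> = sH (\<epsilon> b') (S (a * a') * c * S d)" by (simp add: antipodeR_sw lsimps)
      finally show ?thesis .
    qed
    have lL: "Vector_Spaces.linear sH sH (\<lambda>z. S (a * z) * c * S d)"
      by (rule linI[OF vH vH]) (simp_all add: lsimps)
    have "Pid a c d = sw (\<lambda>a' b'. (\<lambda>z. S (a * z) * c * S d) (sH (\<epsilon> b') a')) (\<Delta> y)"
      unfolding Pid_def in1 by (simp add: lsimps)
    also have "\<dots> = S (a * y) * c * S d"
      by (subst sw_applyL[OF lL, symmetric]) (simp add: counitR_sw)
    finally show ?thesis .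
  qed
  have rhs: "sw (\<lambda>a b. sw (\<lambda>c d. Pid a c d) (\<Delta> b)) (\<Delta> x) = S (x * y)"
  proof -
    have in2: "sw (\<lambda>c d. Pid a c d) (\<Delta> b) = sH (\<epsilon> b) (S (a * y))" for a b
      unfolding Pid_val using sw_sandwich[of "S (a * y)" "\<lambda>c d. c * S d" 1 "\<Delta> b"]
      by (simp add: antipodeR_sw lsimps mult.assoc)
    have lL: "Vector_Spaces.linear sH sH (\<lambda>z. S (z * y))"
      by (rule linI[OF vH vH]) (simp_all add: lsimps)
    have "sw (\<lambda>a b. sw (\<lambda>c d. Pid a c d) (\<Delta> b)) (\<Delta> x) = sw (\<lambda>a b. (\<lambda>z. S (z * y)) (sH (\<epsilon> b) a)) (\<Delta> x)"
      unfolding in2 by (simp add: lsimps)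
    also have "\<dots> = S (x * y)"
      by (subst sw_applyL[OF lL, symmetric]) (simp add: counitR_sw)
    finally show ?thesis .
  qed
  have lhs: "sw (\<lambda>a b. sw (\<lambda>c d. Pde c d b) (\<Delta> a)) (\<Delta> x) = S y * S x"
  proof -
    have "sw (\<lambda>c d. Pde c d b) (\<Delta> a) =
      sw (\<lambda>a' b'. sw (\<lambda>c d. sw (\<lambda>c' d'. S (c * c') * (d * d')) (\<Delta> a')) (\<Delta> a) * (S b' * S b)) (\<Delta> y)" for a b
      unfolding Pde_def T_def
      by (subst sw_swap) (simp add: sw_multR mult.assoc)
    also have "\<dots> a b = sw (\<lambda>a' b'. sH (\<epsilon> a * \<epsilon> a') (S b' * S b)) (\<Delta> y)" for a b
      by (simp add: sw_prod[OF vH bil_antL] \<Delta>_mult[symmetric] antipodeL_sw \<epsilon>_mult lsimps)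
    finally have st: "sw (\<lambda>c d. Pde c d b) (\<Delta> a) = sw (\<lambda>a' b'. sH (\<epsilon> a * \<epsilon> a') (S b' * S b)) (\<Delta> y)" for a b .
    have lL: "Vector_Spaces.linear sH sH (\<lambda>z. S z * S b)" for b
      by (rule linI[OF vH vH]) (simp_all add: lsimps)
    have st2: "sw (\<lambda>a' b'. sH (\<epsilon> a * \<epsilon> a') (S b' * S b)) (\<Delta> y) = sH (\<epsilon> a) (S y * S b)" for a b
    proof -
      have "sw (\<lambda>a' b'. sH (\<epsilon> a * \<epsilon> a') (S b' * S b)) (\<Delta> y)
          = sH (\<epsilon> a) (sw (\<lambda>a' b'. (\<lambda>z. S z * S b) (sH (\<epsilon> a') b')) (\<Delta> y))"
        by (simp only: sw_scale_funH[symmetric] module.scale_scale[OF mH] S_scale sH_multL)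
      also have "\<dots> = sH (\<epsilon> a) (S y * S b)"
        by (subst sw_applyL[OF lL, symmetric]) (simp add: counitL_sw)
      finally show ?thesis .
    qed
    have lL2: "Vector_Spaces.linear sH sH (\<lambda>z. S y * S z)"
      by (rule linI[OF vH vH]) (simp_all add: lsimps)
    have "sw (\<lambda>a b. sw (\<lambda>c d. Pde c d b) (\<Delta> a)) (\<Delta> x) = sw (\<lambda>a b. (\<lambda>z. S y * S z) (sH (\<epsilon> a) b)) (\<Delta> x)"
      by (simp add: st st2 lsimps)
    also have "\<dots> = S y * S x"
      by (subst sw_applyL[OF lL2, symmetric]) (simp add: counitL_sw)
    finally show ?thesis .
  qed
  show ?thesis using E lhs rhs by simp
qed

end


context SQT begin

definition DS :: "'h \<Rightarrow> 'hh" where "DS z = sw (\<lambda>a b. t2 (S b) (S a)) (\<Delta> z)"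

lemma bil_DS: "bilinear_map sH s2 (\<lambda>a b. t2 (S b) (S a))"
  by (rule bilI; rule linI[OF vH v2]) (simp_all add: lsimps)
lemma lin_DS: "Vector_Spaces.linear sH s2 DS"
  unfolding DS_def by (rule lin_sw_arg[OF v2 bil_DS lin\<Delta>])
lemma DS_add: "DS (x + y) = DS x + DS y" by (rule lin_add[OF lin_DS])
lemma DS_scale: "DS (sH c x) = s2 c (DS x)" by (rule lin_scale[OF lin_DS])

lemma sw_t2R: "sw (\<lambda>a b. t2 (f a b) c) y = t2 (sw f y) c"
  by (rule sw_applyL[OF lt2L, symmetric])
lemma sw_t2L: "sw (\<lambda>a b. t2 c (f a b)) y = t2 c (sw f y)"
  by (rule sw_applyL[OF lt2R, symmetric])

lemma DS_G: "sw (\<lambda>a b. \<Delta> a * DS b) (\<Delta> y) = s2 (\<epsilon> y) 1"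
proof -
  have tri1: "trilinear_map sH s2 (\<lambda>p q r. \<Delta> p * t2 (S r) (S q))"
    by (rule trilI; rule linI[OF vH v2]) (simp_all add: lsimps)
  have "sw (\<lambda>a b. \<Delta> a * DS b) (\<Delta> y) = sw (\<lambda>a b. sw (\<lambda>c d. \<Delta> a * t2 (S d) (S c)) (\<Delta> b)) (\<Delta> y)"
    unfolding DS_def by (simp add: sw_multL)
  also have "\<dots> = sw (\<lambda>a b. sw (\<lambda>c d. \<Delta> c * t2 (S b) (S d)) (\<Delta> a)) (\<Delta> y)"
    using coassoc_F[OF v2 tri1, of y] by simp
  also have "\<dots> = sw (\<lambda>a b. t2 (a * S b) 1) (\<Delta> y)"
  proof (rule sw_cong)
    fix a b
    have tri2: "trilinear_map sH s2 (\<lambda>e f d. t2 (e * S b) (f * S d))"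
      by (rule trilI; rule linI[OF vH v2]) (simp_all add: lsimps)
    have "sw (\<lambda>c d. \<Delta> c * t2 (S b) (S d)) (\<Delta> a) = sw (\<lambda>c d. sw (\<lambda>e f. t2 (e * S b) (f * S d)) (\<Delta> c)) (\<Delta> a)"
    proof (rule sw_cong)
      fix c d
      have "\<Delta> c * t2 (S b) (S d) = sw (\<lambda>e f. t2 e f) (\<Delta> c) * t2 (S b) (S d)"
        using sw_lift2[OF v2 bil_t2, of "\<Delta> c"] lift2_rep[OF v2 bil_t2 rep_eq] rep_eq[of "\<Delta> c"]
        by (simp add: sw_def)
      also have "\<dots> = sw (\<lambda>e f. t2 (e * S b) (f * S d)) (\<Delta> c)"
        by (simp add: sw_multR t2_mult)
      finally show "\<Delta> c * t2 (S b) (S d) = sw (\<lambda>e f. t2 (e * S b) (f * S d)) (\<Delta> c)" .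
    qed
    also have "\<dots> = sw (\<lambda>c d. sw (\<lambda>e f. t2 (c * S b) (e * S f)) (\<Delta> d)) (\<Delta> a)"
      by (rule coassoc_F[OF v2 tri2])
    also have "\<dots> = sw (\<lambda>c d. t2 (c * S b) (sH (\<epsilon> d) 1)) (\<Delta> a)"
      by (simp add: sw_t2L antipodeR_sw)
    also have "\<dots> = sw (\<lambda>c d. t2 (sH (\<epsilon> d) c * S b) 1) (\<Delta> a)"
      by (simp add: lsimps)
    also have "\<dots> = t2 (a * S b) 1"
      by (simp add: sw_t2R sw_multR[symmetric] counitR_sw)
    finally show "sw (\<lambda>c d. \<Delta> c * t2 (S b) (S d)) (\<Delta> a) = t2 (a * S b) 1" .
  qed
  also have "\<dots> = s2 (\<epsilon> y) 1"
    by (simp add: sw_t2R antipodeR_sw t2_scaleL t2_one)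
  finally show ?thesis .
qed

lemma \<Delta>_S: "\<Delta> (S h) = DS h"
proof -
  have tri: "trilinear_map sH s2 (\<lambda>p q r. \<Delta> (S p) * \<Delta> q * DS r)"
    by (rule trilI; rule linI[OF vH v2]) (simp_all add: lsimps DS_add DS_scale)
  have e: "sw (\<lambda>a b. sw (\<lambda>c d. \<Delta> (S c) * \<Delta> d * DS b) (\<Delta> a)) (\<Delta> h)
      = sw (\<lambda>a b. sw (\<lambda>c d. \<Delta> (S a) * \<Delta> c * DS d) (\<Delta> b)) (\<Delta> h)"
    by (rule coassoc_F[OF v2 tri])
  have l: "sw (\<lambda>a b. sw (\<lambda>c d. \<Delta> (S c) * \<Delta> d * DS b) (\<Delta> a)) (\<Delta> h) = DS h"
  proof -
    have "sw (\<lambda>c d. \<Delta> (S c) * \<Delta> d * DS b) (\<Delta> a) = s2 (\<epsilon> a) (DS b)" for a b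
    proof -
      have "sw (\<lambda>c d. \<Delta> (S c) * \<Delta> d * DS b) (\<Delta> a) = \<Delta> (sw (\<lambda>c d. S c * d) (\<Delta> a)) * DS b"
        by (simp add: sw_multR[symmetric] sw_applyL[OF lin\<Delta>] \<Delta>_mult)
      also have "\<dots> = s2 (\<epsilon> a) (DS b)" by (simp add: antipodeL_sw \<Delta>_scale \<Delta>_one lsimps)
      finally show ?thesis .
    qed
    then have "sw (\<lambda>a b. sw (\<lambda>c d. \<Delta> (S c) * \<Delta> d * DS b) (\<Delta> a)) (\<Delta> h) = sw (\<lambda>a b. DS (sH (\<epsilon> a) b)) (\<Delta> h)"
      by (simp add: DS_scale)
    also have "\<dots> = DS h" by (simp add: sw_applyL[OF lin_DS, symmetric] counitL_sw)
    finally show ?thesis .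
  qed
  have r: "sw (\<lambda>a b. sw (\<lambda>c d. \<Delta> (S a) * \<Delta> c * DS d) (\<Delta> b)) (\<Delta> h) = \<Delta> (S h)"
  proof -
    have "sw (\<lambda>c d. \<Delta> (S a) * \<Delta> c * DS d) (\<Delta> b) = s2 (\<epsilon> b) (\<Delta> (S a))" for a b
      using DS_G[of b] by (simp add: mult.assoc sw_multL[symmetric] lsimps)
    then have "sw (\<lambda>a b. sw (\<lambda>c d. \<Delta> (S a) * \<Delta> c * DS d) (\<Delta> b)) (\<Delta> h) = sw (\<lambda>a b. \<Delta> (S (sH (\<epsilon> b) a))) (\<Delta> h)"
      by (simp add: lsimps)
    also have "\<dots> = \<Delta> (S h)" by (simp add: sw_applyL[OF lin_comp[OF linS lin\<Delta>], symmetric] counitR_sw)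
    finally show ?thesis .
  qed
  show ?thesis using e l r by simp
qed

end


context SQT begin

lemma t2_inj_1L: assumes "t2 1 w = 0" shows "w = 0"
proof (rule ccontr)
  assume w: "w \<noteq> 0"
  interpret H: vector_space sH by (rule vH)
  interpret M: vector_space s2 by (rule v2)
  have i1: "\<not> H.dependent {1}" by simp
  have iw: "\<not> H.dependent {w}" using w by simp
  have "\<not> M.dependent (case_prod t2 ` ({1} \<times> {w}))"
    using T2 i1 iw unfolding is_tensor2_def by blast
  then have "\<not> M.dependent {t2 1 w}" by simp
  then show False using assms by simp
qed

lemma t2_inj_1R: assumes "t2 w 1 = 0" shows "w = 0"
proof (rule ccontr)
  assume w: "w \<noteq> 0"
  interpret H: vector_space sH by (rule vH)
  interpret M: vector_space s2 by (rule v2)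
  have i1: "\<not> H.dependent {1}" by simp
  have iw: "\<not> H.dependent {w}" using w by simp
  have "\<not> M.dependent (case_prod t2 ` ({w} \<times> {1}))"
    using T2 i1 iw unfolding is_tensor2_def by blast
  then have "\<not> M.dependent {t2 w 1}" by simp
  then show False using assms by simp
qed

lemma rinv_eq: assumes "x * y = 1" "y * x = 1" shows "rinv x = (y::'a::ring_1)"
  unfolding rinv_def
proof (rule the_equality)
  show "x * y = 1 \<and> y * x = 1" using assms by simp
  fix z assume z: "x * z = 1 \<and> z * x = 1"
  have "z = (y * x) * z" using assms by simp
  also have "\<dots> = y * (x * z)" by (simp add: mult.assoc)
  also have "\<dots> = y" using z by simp
  finally show "z = y" .
qed

lemma rinv_mult: assumes "x * x' = 1" "x' * x = 1" "y * y' = 1" "y' * y = 1"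
  shows "rinv (x * y) = y' * (x' :: 'a::ring_1)"
proof (rule rinv_eq)
  have "x * y * (y' * x') = x * (y * y') * x'" by (simp add: mult.assoc)
  then show "x * y * (y' * x') = 1" using assms by simp
  have "y' * x' * (x * y) = y' * (x' * x) * y" by (simp add: mult.assoc)
  then show "y' * x' * (x * y) = 1" using assms by simp
qed

lemma rinv_inv: assumes "x * y = 1" "y * x = 1" shows "x * rinv x = 1" "rinv x * x = (1::'a::ring_1)"
  using rinv_eq[OF assms] assms by simp_all

context
  fixes I :: "nat set" and A B :: "nat \<Rightarrow> 'h"
  assumes Rr: "R = (\<Sum>i\<in>I. t2 (A i) (B i))"
begin

lemma R_cancel_left: assumes "R = z * R" shows "z = 1"
proof -
  obtain R' where R': "R * R' = 1" "R' * R = 1" using Rinv_ex by blast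
  have "R * R' = z * R * R'" using assms by simp
  then show ?thesis using R' by (simp add: mult.assoc)
qed

lemma epsA: "(\<Sum>i\<in>I. sH (\<epsilon> (A i)) (B i)) = 1"
proof -
  define e where "e = (\<Sum>i\<in>I. sH (\<epsilon> (A i)) (B i))"
  have F: "trilinear_map sH s2 (\<lambda>x y z. t2 (sH (\<epsilon> x) y) z)"
    by (rule trilI; rule linI[OF vH v2]) (simp_all add: lsimps mult.commute)
  have "(\<Sum>i\<in>I. sw (\<lambda>c d. t2 (sH (\<epsilon> c) d) (B i)) (\<Delta> (A i))) = (\<Sum>i\<in>I. \<Sum>j\<in>I. t2 (sH (\<epsilon> (A i)) (A j)) (B i * B j))"
    by (rule ax1F[OF v2 F Rr])
  moreover have "(\<Sum>i\<in>I. sw (\<lambda>c d. t2 (sH (\<epsilon> c) d) (B i)) (\<Delta> (A i))) = R"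
    unfolding Rr by (simp add: sw_t2R counitL_sw)
  moreover have "(\<Sum>i\<in>I. \<Sum>j\<in>I. t2 (sH (\<epsilon> (A i)) (A j)) (B i * B j)) = t2 1 e * R"
    unfolding Rr e_def
    apply (simp add: sum_distrib_left sum_distrib_right t2_mult t2_sumR lsimps)
    apply (rule sum.swap)
    done
  ultimately have "R = t2 1 e * R" by simp
  then have "t2 1 e = t2 1 1" using R_cancel_left t2_one by simp
  then have "t2 1 (e - 1) = 0" by (simp add: t2_diffR)
  then have "e - 1 = 0" by (rule t2_inj_1L)
  then show ?thesis unfolding e_def by simp
qed

lemma epsB: "(\<Sum>i\<in>I. sH (\<epsilon> (B i)) (A i)) = 1"
proof -
  define e where "e = (\<Sum>i\<in>I. sH (\<epsilon> (B i)) (A i))"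
  have F: "trilinear_map sH s2 (\<lambda>x y z. t2 x (sH (\<epsilon> z) y))"
    by (rule trilI; rule linI[OF vH v2]) (simp_all add: lsimps mult.commute)
  have "(\<Sum>i\<in>I. sw (\<lambda>c d. t2 (A i) (sH (\<epsilon> d) c)) (\<Delta> (B i))) = (\<Sum>i\<in>I. \<Sum>j\<in>I. t2 (A i * A j) (sH (\<epsilon> (B i)) (B j)))"
    by (rule ax2F[OF v2 F Rr])
  moreover have "(\<Sum>i\<in>I. sw (\<lambda>c d. t2 (A i) (sH (\<epsilon> d) c)) (\<Delta> (B i))) = R"
    unfolding Rr by (simp add: sw_t2L counitR_sw)
  moreover have "(\<Sum>i\<in>I. \<Sum>j\<in>I. t2 (A i * A j) (sH (\<epsilon> (B i)) (B j))) = t2 e 1 * R"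
    unfolding Rr e_def
    apply (simp add: sum_distrib_left sum_distrib_right t2_mult t2_sumL lsimps)
    apply (rule sum.swap)
    done
  ultimately have "R = t2 e 1 * R" by simp
  then have "t2 e 1 = t2 1 1" using R_cancel_left t2_one by simp
  then have "t2 (e - 1) 1 = 0" by (simp add: t2_diffL)
  then have "e - 1 = 0" by (rule t2_inj_1R)
  then show ?thesis unfolding e_def by simp
qed

lemma Rinv_left: "(\<Sum>i\<in>I. t2 (S (A i)) (B i)) * R = 1"
proof -
  have F: "trilinear_map sH s2 (\<lambda>x y z. t2 (S x * y) z)"
    by (rule trilI; rule linI[OF vH v2]) (simp_all add: lsimps)
  have "(\<Sum>i\<in>I. sw (\<lambda>c d. t2 (S c * d) (B i)) (\<Delta> (A i))) = (\<Sum>i\<in>I. \<Sum>j\<in>I. t2 (S (A i) * A j) (B i * B j))"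
    by (rule ax1F[OF v2 F Rr])
  moreover have "(\<Sum>i\<in>I. sw (\<lambda>c d. t2 (S c * d) (B i)) (\<Delta> (A i))) = t2 1 (\<Sum>i\<in>I. sH (\<epsilon> (A i)) (B i))"
    by (simp add: sw_t2R antipodeL_sw lsimps t2_sumR)
  then have "(\<Sum>i\<in>I. sw (\<lambda>c d. t2 (S c * d) (B i)) (\<Delta> (A i))) = 1" using epsA t2_one by simp
  moreover have "(\<Sum>i\<in>I. \<Sum>j\<in>I. t2 (S (A i) * A j) (B i * B j)) = (\<Sum>i\<in>I. t2 (S (A i)) (B i)) * R"
    unfolding Rr
    apply (simp add: sum_distrib_left sum_distrib_right t2_mult)
    apply (rule sum.swap)
    done
  ultimately show ?thesis by simp
qed

lemma Rinv_right: "R * (\<Sum>i\<in>I. t2 (S (A i)) (B i)) = 1"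
proof -
  have F: "trilinear_map sH s2 (\<lambda>x y z. t2 (x * S y) z)"
    by (rule trilI; rule linI[OF vH v2]) (simp_all add: lsimps)
  have "(\<Sum>i\<in>I. sw (\<lambda>c d. t2 (c * S d) (B i)) (\<Delta> (A i))) = (\<Sum>i\<in>I. \<Sum>j\<in>I. t2 (A i * S (A j)) (B i * B j))"
    by (rule ax1F[OF v2 F Rr])
  moreover have "(\<Sum>i\<in>I. sw (\<lambda>c d. t2 (c * S d) (B i)) (\<Delta> (A i))) = t2 1 (\<Sum>i\<in>I. sH (\<epsilon> (A i)) (B i))"
    by (simp add: sw_t2R antipodeR_sw lsimps t2_sumR)
  then have "(\<Sum>i\<in>I. sw (\<lambda>c d. t2 (c * S d) (B i)) (\<Delta> (A i))) = 1" using epsA t2_one by simp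
  moreover have "(\<Sum>i\<in>I. \<Sum>j\<in>I. t2 (A i * S (A j)) (B i * B j)) = R * (\<Sum>i\<in>I. t2 (S (A i)) (B i))"
    unfolding Rr
    apply (simp add: sum_distrib_left sum_distrib_right t2_mult)
    apply (rule sum.swap)
    done
  ultimately show ?thesis by simp
qed

lemma rinvR_rep: "rinv R = (\<Sum>i\<in>I. t2 (S (A i)) (B i))"
  by (rule rinv_eq[OF Rinv_right Rinv_left])

lemma SSR_rep: "(\<Sum>i\<in>I. t2 (S (A i)) (S (B i))) = R"
proof -
  have F: "trilinear_map sH s2 (\<lambda>x y z. t2 (S x) (S y * z))"
    by (rule trilI; rule linI[OF vH v2]) (simp_all add: lsimps)
  have "(\<Sum>i\<in>I. sw (\<lambda>c d. t2 (S (A i)) (S c * d)) (\<Delta> (B i))) = (\<Sum>i\<in>I. \<Sum>j\<in>I. t2 (S (A i * A j)) (S (B j) * B i))"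
    by (rule ax2F[OF v2 F Rr])
  moreover have "(\<Sum>i\<in>I. sw (\<lambda>c d. t2 (S (A i)) (S c * d)) (\<Delta> (B i))) = 1"
  proof -
    have "(\<Sum>i\<in>I. sw (\<lambda>c d. t2 (S (A i)) (S c * d)) (\<Delta> (B i))) = (\<Sum>i\<in>I. t2 (S (sH (\<epsilon> (B i)) (A i))) 1)"
      by (simp add: sw_t2L antipodeL_sw lsimps)
    also have "\<dots> = t2 (S (\<Sum>i\<in>I. sH (\<epsilon> (B i)) (A i))) 1" by (simp add: t2_sumL S_sum)
    also have "\<dots> = 1" using epsB by (simp add: S_one t2_one)
    finally show ?thesis .
  qed
  moreover have "(\<Sum>i\<in>I. \<Sum>j\<in>I. t2 (S (A i * A j)) (S (B j) * B i)) = (\<Sum>i\<in>I. t2 (S (A i)) (S (B i))) * rinv R"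
    apply (subst rinvR_rep)
    apply (simp only: sum_distrib_left sum_distrib_right t2_mult S_mult)
    done
  ultimately have "(\<Sum>i\<in>I. t2 (S (A i)) (S (B i))) * rinv R = 1" by simp
  then have "(\<Sum>i\<in>I. t2 (S (A i)) (S (B i))) * rinv R * R = R" by simp
  then show ?thesis using Rinv_left unfolding rinvR_rep[symmetric] by (simp add: mult.assoc)
qed

end

end


lemma min_rep_dual_gen:
  fixes sH :: "'k::field \<Rightarrow> 'h::ab_group_add \<Rightarrow> 'h" and s2 :: "'k \<Rightarrow> 'hh::ab_group_add \<Rightarrow> 'hh"
    and \<tau> :: "'h \<Rightarrow> 'h \<Rightarrow> 'hh" and I :: "nat set"
  assumes vH: "vector_space sH" and v2: "vector_space s2" and vK: "vector_space ((*) :: 'k \<Rightarrow> 'k \<Rightarrow> 'k)"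
    and bil: "bilinear_map sH s2 \<tau>"
    and fin: "finite I" and y: "y = (\<Sum>i\<in>I. \<tau> (A i) (B i))"
    and min: "\<And>(J::nat set) A' B'. finite J \<Longrightarrow> y = (\<Sum>i\<in>J. \<tau> (A' i) (B' i)) \<Longrightarrow> card I \<le> card J"
    and j: "j \<in> I"
  shows "\<exists>\<phi>. Vector_Spaces.linear sH (*) \<phi> \<and> (\<forall>i\<in>I. \<phi> (A i) = (if i = j then 1 else 0))"
proof -
  interpret H: vector_space sH by (rule vH)
  interpret pHK: vector_space_pair sH "(*)" using vH vK by (rule vsp)
  have l1: "Vector_Spaces.linear sH s2 (\<tau> a)" for a using bil by (simp add: bilinear_map_def)
  have l2: "Vector_Spaces.linear sH s2 (\<lambda>a. \<tau> a b)" for b using bil by (simp add: bilinear_map_def)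
  have inj: "inj_on A I"
  proof (rule ccontr)
    assume "\<not> inj_on A I"
    then obtain i k where ik: "i \<in> I" "k \<in> I" "i \<noteq> k" "A i = A k" unfolding inj_on_def by blast
    define B' where "B' = B(i := B i + B k)"
    have fJ: "finite (I - {k})" using fin by simp
    have iJ: "i \<in> I - {k}" using ik by simp
    have pt: "\<tau> (A l) (B' l) = \<tau> (A l) (B l) + (if l = i then \<tau> (A k) (B k) else 0)" for l
      unfolding B'_def using ik(4) lin_add[OF l1[of "A i"]] by simp
    have "(\<Sum>l\<in>I - {k}. \<tau> (A l) (B' l)) = (\<Sum>l\<in>I - {k}. \<tau> (A l) (B l)) + (\<Sum>l\<in>I - {k}. if l = i then \<tau> (A k) (B k) else 0)"
      unfolding pt by (rule sum.distrib)
    also have "(\<Sum>l\<in>I - {k}. if l = i then \<tau> (A k) (B k) else 0) = \<tau> (A k) (B k)"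
      using sum.delta[OF fJ, of i "\<lambda>_. \<tau> (A k) (B k)"] iJ by simp
    also have "(\<Sum>l\<in>I - {k}. \<tau> (A l) (B l)) + \<tau> (A k) (B k) = y"
      unfolding y using sum.remove[OF fin ik(2), of "\<lambda>l. \<tau> (A l) (B l)"] by (simp add: add.commute)
    finally have "y = (\<Sum>l\<in>I - {k}. \<tau> (A l) (B' l))" by simp
    then have "card I \<le> card (I - {k})" by (rule min[OF fJ])
    then show False using card_Diff1_less[OF fin ik(2)] by linarith
  qed
  have ind: "\<not> H.dependent (A ` I)"
  proof
    assume "H.dependent (A ` I)"
    then obtain u where u: "\<exists>v\<in>A ` I. u v \<noteq> 0" "(\<Sum>v\<in>A ` I. sH (u v) v) = 0"
      using H.dependent_finite[of "A ` I"] fin by blast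
    define c where "c i = u (A i)" for i
    obtain k where k: "k \<in> I" "c k \<noteq> 0" using u(1) unfolding c_def by blast
    have s0: "(\<Sum>i\<in>I. sH (c i) (A i)) = 0" using u(2) unfolding c_def sum.reindex[OF inj] by simp
    have Ak: "A k = - (\<Sum>i\<in>I - {k}. sH (c i / c k) (A i))"
    proof -
      have "0 = sH (c k) (A k) + (\<Sum>i\<in>I - {k}. sH (c i) (A i))"
        using s0 k fin by (subst (asm) sum.remove[of _ k]) auto
      then have e0: "sH (c k) (A k) = - (\<Sum>i\<in>I - {k}. sH (c i) (A i))"
        by (simp add: eq_neg_iff_add_eq_0)
      have "A k = sH (inverse (c k)) (sH (c k) (A k))" using k(2) by simp
      also have "\<dots> = - (\<Sum>i\<in>I - {k}. sH (inverse (c k)) (sH (c i) (A i)))"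
        unfolding e0 by (simp add: H.scale_sum_right)
      also have "\<dots> = - (\<Sum>i\<in>I - {k}. sH (c i / c k) (A i))"
        by (simp add: divide_inverse mult.commute)
      finally show ?thesis .
    qed
    define B' where "B' i = B i - sH (c i / c k) (B k)" for i
    have fJ: "finite (I - {k})" using fin by simp
    have "(\<Sum>l\<in>I - {k}. \<tau> (A l) (B' l)) = (\<Sum>l\<in>I - {k}. \<tau> (A l) (B l)) - (\<Sum>l\<in>I - {k}. \<tau> (A l) (sH (c l / c k) (B k)))"
      unfolding B'_def by (simp add: lin_diff[OF l1] sum_subtractf)
    also have "(\<Sum>l\<in>I - {k}. \<tau> (A l) (sH (c l / c k) (B k))) = - \<tau> (A k) (B k)"
    proof -
      have "(\<Sum>l\<in>I - {k}. \<tau> (A l) (sH (c l / c k) (B k))) = (\<Sum>l\<in>I - {k}. \<tau> (sH (c l / c k) (A l)) (B k))"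
        by (rule sum.cong[OF refl]) (simp add: lin_scale[OF l1] lin_scale[OF l2])
      also have "\<dots> = \<tau> (\<Sum>l\<in>I - {k}. sH (c l / c k) (A l)) (B k)"
        by (simp add: lin_sum[OF l2])
      also have "\<dots> = \<tau> (- A k) (B k)" by (simp add: Ak)
      also have "\<dots> = - \<tau> (A k) (B k)" by (simp add: lin_neg[OF l2])
      finally show ?thesis .
    qed
    finally have "(\<Sum>l\<in>I - {k}. \<tau> (A l) (B' l)) = (\<Sum>l\<in>I - {k}. \<tau> (A l) (B l)) + \<tau> (A k) (B k)" by simp
    also have "\<dots> = y" unfolding y using k fin by (subst (2) sum.remove[of _ k]) (auto simp: add.commute)
    finally have "y = (\<Sum>l\<in>I - {k}. \<tau> (A l) (B' l))" by simp
    then have "card I \<le> card (I - {k})" by (rule min[OF fJ])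
    then show False using card_Diff1_less[OF fin k(1)] by linarith
  qed
  define \<phi> where "\<phi> = pHK.construct (A ` I) (\<lambda>v. if v = A j then 1 else 0)"
  have "Vector_Spaces.linear sH (*) \<phi>" unfolding \<phi>_def by (rule pHK.linear_construct[OF ind])
  moreover have "\<forall>i\<in>I. \<phi> (A i) = (if i = j then 1 else 0)"
  proof
    fix i assume i: "i \<in> I"
    have "\<phi> (A i) = (if A i = A j then 1 else 0)"
      unfolding \<phi>_def using i by (subst pHK.construct_basis[OF ind]) auto
    then show "\<phi> (A i) = (if i = j then 1 else 0)" using inj i j unfolding inj_on_def by auto
  qed
  ultimately show ?thesis by blast
qed



context SQT begin

lemma min_rep_ex: "\<exists>(I::nat set) A B. finite I \<and> R = (\<Sum>i\<in>I. t2 (A i) (B i)) \<and>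
   (\<forall>(J::nat set) A' B'. finite J \<and> R = (\<Sum>i\<in>J. t2 (A' i) (B' i)) \<longrightarrow> card I \<le> card J)"
proof -
  define P where "P m \<longleftrightarrow> (\<exists>(I::nat set) A B. finite I \<and> card I = m \<and> R = (\<Sum>i\<in>I. t2 (A i) (B i)))" for m
  have "P (card {..<rN R})" unfolding P_def using rep_eq[of R] by blast
  then have "P (LEAST m. P m)" by (rule LeastI)
  then obtain I :: "nat set" and A B where I: "finite I" "card I = (LEAST m. P m)" "R = (\<Sum>i\<in>I. t2 (A i) (B i))"
    unfolding P_def by blast
  have "card I \<le> card J" if "finite J" "R = (\<Sum>i\<in>J. t2 (A' i) (B' i))" for J :: "nat set" and A' B'
  proof -
    have "P (card J)" unfolding P_def using that by blast
    then show ?thesis unfolding I(2) by (rule Least_le)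
  qed
  then show ?thesis using I by blast
qed

definition "mrep = (SOME r::nat set \<times> (nat \<Rightarrow> 'h) \<times> (nat \<Rightarrow> 'h). finite (fst r) \<and> R = (\<Sum>i\<in>fst r. t2 (fst (snd r) i) (snd (snd r) i)) \<and>
   (\<forall>(J::nat set) A' B'. finite J \<and> R = (\<Sum>i\<in>J. t2 (A' i) (B' i)) \<longrightarrow> card (fst r) \<le> card J))"
definition "mI = fst mrep"
definition "mA = fst (snd mrep)"
definition "mB = snd (snd mrep)"

lemma mrep_props: "finite mI \<and> R = (\<Sum>i\<in>mI. t2 (mA i) (mB i)) \<and>
   (\<forall>(J::nat set) A' B'. finite J \<and> R = (\<Sum>i\<in>J. t2 (A' i) (B' i)) \<longrightarrow> card mI \<le> card J)"
proof -
  obtain I :: "nat set" and A B where h: "finite I \<and> R = (\<Sum>i\<in>I. t2 (A i) (B i)) \<and>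
   (\<forall>(J::nat set) A' B'. finite J \<and> R = (\<Sum>i\<in>J. t2 (A' i) (B' i)) \<longrightarrow> card I \<le> card J)"
    using min_rep_ex by blast
  have ex: "\<exists>r::nat set \<times> (nat \<Rightarrow> 'h) \<times> (nat \<Rightarrow> 'h). finite (fst r) \<and> R = (\<Sum>i\<in>fst r. t2 (fst (snd r) i) (snd (snd r) i)) \<and>
   (\<forall>(J::nat set) A' B'. finite J \<and> R = (\<Sum>i\<in>J. t2 (A' i) (B' i)) \<longrightarrow> card (fst r) \<le> card J)"
    apply (rule exI[where x="(I, A, B)"])
    apply (simp only: fst_conv snd_conv)
    apply (rule h)
    done
  show ?thesis unfolding mI_def mA_def mB_def mrep_def by (rule someI_ex[OF ex])
qed

lemma mfin: "finite mI" using mrep_props by blast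
lemma mR: "R = (\<Sum>i\<in>mI. t2 (mA i) (mB i))" using mrep_props by blast
lemma mmin: "finite J \<Longrightarrow> R = (\<Sum>i\<in>J. t2 (A' i) (B' i)) \<Longrightarrow> card mI \<le> card J" for J :: "nat set"
  using mrep_props by blast

lemma dualA: "j \<in> mI \<Longrightarrow> \<exists>\<phi>. Vector_Spaces.linear sH (*) \<phi> \<and> (\<forall>i\<in>mI. \<phi> (mA i) = (if i = j then 1 else 0))"
  by (rule min_rep_dual_gen[OF vH v2 vK bil_t2 mfin mR mmin])

lemma dualB: "j \<in> mI \<Longrightarrow> \<exists>\<phi>. Vector_Spaces.linear sH (*) \<phi> \<and> (\<forall>i\<in>mI. \<phi> (mB i) = (if i = j then 1 else 0))"
proof -
  assume j: "j \<in> mI"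
  have bil': "bilinear_map sH s2 (\<lambda>a b. t2 b a)"
    using bil_t2 unfolding bilinear_map_def by blast
  have R': "R = (\<Sum>i\<in>mI. (\<lambda>a b. t2 b a) (mB i) (mA i))" using mR by simp
  have min': "card mI \<le> card J" if "finite J" "R = (\<Sum>i\<in>J. (\<lambda>a b. t2 b a) (A' i) (B' i))" for J :: "nat set" and A' B'
    using mmin[of J B' A'] that by simp
  show ?thesis by (rule min_rep_dual_gen[OF vH v2 vK bil' mfin R' min' j])
qed

lemma sum_delta_scale: "finite I \<Longrightarrow> j \<in> I \<Longrightarrow> (\<Sum>i\<in>I. s2 (if i = j then 1 else 0) (X i)) = X j"
proof -
  assume a: "finite I" "j \<in> I"
  have "\<And>i. s2 (if i = j then 1 else 0) (X i) = (if i = j then X i else 0)" by (simp add: HH_vs)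
  then show ?thesis using a by (simp add: sum.delta)
qed

end


context SQT begin

definition "Tw y = sw (\<lambda>a b. t2 b a) y"
definition "SSw y = sw (\<lambda>a b. t2 (S a) (S b)) y"
definition "Pp x \<longleftrightarrow> Tw (\<Delta> x) * R = R * \<Delta> x"
definition "u0 = sw (\<lambda>a b. S b * a) R"

lemma bil_T: "bilinear_map sH s2 (\<lambda>a b. t2 b a)"
  by (rule bilI; rule linI[OF vH v2]) (simp_all add: lsimps)
lemma bil_SS: "bilinear_map sH s2 (\<lambda>a b. t2 (S a) (S b))"
  by (rule bilI; rule linI[OF vH v2]) (simp_all add: lsimps)
lemma bil_u: "bilinear_map sH sH (\<lambda>a b. S b * a)"
  by (rule bilI; rule linI[OF vH vH]) (simp_all add: lsimps)

lemma sw_t2_id: "sw t2 y = y"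
  unfolding sw_def by (rule rep_eq[symmetric])

lemma lin_T: "Vector_Spaces.linear s2 s2 Tw"
  using sw_lin[OF v2 bil_T] unfolding Tw_def[abs_def] .
lemma lin_SS: "Vector_Spaces.linear s2 s2 SSw"
  using sw_lin[OF v2 bil_SS] unfolding SSw_def[abs_def] .

lemma sw_T: assumes V: "vector_space sV" and f: "bilinear_map sH sV f"
  shows "sw f (Tw y) = sw (\<lambda>a b. f b a) y"
proof -
  have "Tw y = (\<Sum>i<rN y. t2 (rB y i) (rA y i))"
    unfolding Tw_def sw_def ..
  then have "sw f (Tw y) = (\<Sum>i<rN y. f (rB y i) (rA y i))" by (rule sw_rep[OF V f])
  also have "\<dots> = sw (\<lambda>a b. f b a) y" unfolding sw_def ..
  finally show ?thesis .
qed

lemma T_mult: "Tw (y * z) = Tw y * Tw z"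
  unfolding Tw_def
  by (simp only: sw_prod[OF v2 bil_T, symmetric] sw_multR, simp only: sw_multL t2_mult)

lemma SS_mult: "SSw (y * z) = SSw z * SSw y"
  unfolding SSw_def
  by (simp add: sw_prod[OF v2 bil_SS, symmetric] sw_multL sw_multR t2_mult S_mult)

lemma SS_R: "SSw R = R"
  unfolding SSw_def using sw_rep[OF v2 bil_SS mR] SSR_rep[OF mR] by simp

lemma DS_SS: "DS x = SSw (Tw (\<Delta> x))"
  unfolding SSw_def DS_def sw_T[OF v2 bil_SS] ..

lemma T_DS: "Tw (DS x) = SSw (\<Delta> x)"
  unfolding Tw_def DS_def SSw_def
  by (simp add: sw_applyL[OF lin_T[unfolded Tw_def[abs_def]]] sw_t2[OF v2 bil_T])

lemma P_S: "Pp x \<Longrightarrow> Pp (S x)"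
  unfolding Pp_def
proof -
  assume P: "Tw (\<Delta> x) * R = R * \<Delta> x"
  have "Tw (\<Delta> (S x)) * R = SSw (\<Delta> x) * SSw R" by (simp add: \<Delta>_S T_DS SS_R)
  also have "\<dots> = SSw (R * \<Delta> x)" by (simp add: SS_mult)
  also have "\<dots> = SSw (Tw (\<Delta> x) * R)" by (simp add: P)
  also have "\<dots> = R * \<Delta> (S x)" by (simp add: SS_mult SS_R \<Delta>_S DS_SS)
  finally show "Tw (\<Delta> (S x)) * R = R * \<Delta> (S x)" .
qed

lemma P_scale: "Pp x \<Longrightarrow> Pp (sH c x)"
  unfolding Pp_def by (simp add: \<Delta>_scale lin_scale[OF lin_T] s2_multL s2_multR)

lemma TR_sw: "Tw y * R = sw (\<lambda>a b. \<Sum>l\<in>mI. t2 (b * mA l) (a * mB l)) y"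
proof -
  have "Tw y * R = Tw y * (\<Sum>l\<in>mI. t2 (mA l) (mB l))" by (rule arg_cong[OF mR])
  then show ?thesis unfolding Tw_def by (simp add: sw_multR sum_distrib_left t2_mult sw_sum_fun)
qed

lemma RD_sw: "R * y = sw (\<lambda>a b. \<Sum>l\<in>mI. t2 (mA l * a) (mB l * b)) y"
proof -
  have "R * y = (\<Sum>l\<in>mI. t2 (mA l) (mB l)) * sw t2 y" unfolding sw_t2_id by (rule arg_cong[OF mR])
  also have "\<dots> = sw (\<lambda>a b. \<Sum>l\<in>mI. t2 (mA l * a) (mB l * b)) y"
    by (simp add: sw_multL sum_distrib_right t2_mult)
  finally show ?thesis .
qed

lemma PA: assumes j: "j \<in> mI" shows "Pp (mA j)"
proof -
  obtain \<phi> where \<phi>: "Vector_Spaces.linear sH (*) \<phi>" "\<And>i. i \<in> mI \<Longrightarrow> \<phi> (mB i) = (if i = j then 1 else 0)"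
    using dualB[OF j] by blast
  have \<phi>a: "\<phi> (x + y) = \<phi> x + \<phi> y" for x y by (rule lin_add[OF \<phi>(1)])
  have \<phi>s: "\<phi> (sH c x) = c * \<phi> x" for c x by (rule lin_scale[OF \<phi>(1)])
  have F: "trilinear_map sH s2 (\<lambda>x y z. s2 (\<phi> z) (t2 x y))"
    by (rule trilI; rule linI[OF vH v2]) (simp_all add: lsimps \<phi>a \<phi>s mult.commute)
  have eqL: "sw (\<lambda>a1 a2. \<Sum>l\<in>mI. s2 c (t2 (a2 * mA l) (a1 * mB l))) y = s2 c (Tw y * R)" for c y
    by (simp only: TR_sw sw_scale_fun2[symmetric] module.scale_sum_right[OF m2])
  have eqR: "sw (\<lambda>a1 a2. \<Sum>l\<in>mI. s2 c (t2 (mA l * a1) (mB l * a2))) y = s2 c (R * y)" for c y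
    by (simp only: RD_sw sw_scale_fun2[symmetric] module.scale_sum_right[OF m2])
  have "(\<Sum>i\<in>mI. s2 (\<phi> (mB i)) (Tw (\<Delta> (mA i)) * R)) = (\<Sum>i\<in>mI. s2 (\<phi> (mB i)) (R * \<Delta> (mA i)))"
    using ax4F[OF v2 F mR] unfolding eqL eqR .
  moreover have "(\<Sum>i\<in>mI. s2 (\<phi> (mB i)) (X i)) = X j" for X
    using sum_delta_scale[OF mfin j, of X] \<phi>(2) by (simp cong: sum.cong)
  ultimately show ?thesis unfolding Pp_def by simp
qed

lemma PB: assumes j: "j \<in> mI" shows "Pp (mB j)"
proof -
  obtain \<phi> where \<phi>: "Vector_Spaces.linear sH (*) \<phi>" "\<And>i. i \<in> mI \<Longrightarrow> \<phi> (mA i) = (if i = j then 1 else 0)"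
    using dualA[OF j] by blast
  have \<phi>a: "\<phi> (x + y) = \<phi> x + \<phi> y" for x y by (rule lin_add[OF \<phi>(1)])
  have \<phi>s: "\<phi> (sH c x) = c * \<phi> x" for c x by (rule lin_scale[OF \<phi>(1)])
  have F: "trilinear_map sH s2 (\<lambda>x y z. s2 (\<phi> x) (t2 y z))"
    by (rule trilI; rule linI[OF vH v2]) (simp_all add: lsimps \<phi>a \<phi>s mult.commute)
  have eqL: "sw (\<lambda>a1 a2. \<Sum>l\<in>mI. s2 c (t2 (a2 * mA l) (a1 * mB l))) y = s2 c (Tw y * R)" for c y
    by (simp only: TR_sw sw_scale_fun2[symmetric] module.scale_sum_right[OF m2])
  have eqR: "sw (\<lambda>a1 a2. \<Sum>l\<in>mI. s2 c (t2 (mA l * a1) (mB l * a2))) y = s2 c (R * y)" for c y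
    by (simp only: RD_sw sw_scale_fun2[symmetric] module.scale_sum_right[OF m2])
  have "(\<Sum>i\<in>mI. s2 (\<phi> (mA i)) (Tw (\<Delta> (mB i)) * R)) = (\<Sum>i\<in>mI. s2 (\<phi> (mA i)) (R * \<Delta> (mB i)))"
    using ax3F[OF v2 F mR] unfolding eqL eqR .
  moreover have "(\<Sum>i\<in>mI. s2 (\<phi> (mA i)) (X i)) = X j" for X
    using sum_delta_scale[OF mfin j, of X] \<phi>(2) by (simp cong: sum.cong)
  ultimately show ?thesis unfolding Pp_def by simp
qed

definition "Good x \<longleftrightarrow> (\<exists>(M::(nat \<times> nat) set) Y Z. \<Delta> x = (\<Sum>m\<in>M. t2 (Y m) (Z m)) \<and> (\<forall>m\<in>M. Pp (Y m)))"

lemma GoodA: assumes j: "j \<in> mI" shows "Good (mA j)"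
proof -
  obtain \<phi> where \<phi>: "Vector_Spaces.linear sH (*) \<phi>" "\<And>i. i \<in> mI \<Longrightarrow> \<phi> (mB i) = (if i = j then 1 else 0)"
    using dualB[OF j] by blast
  have \<phi>a: "\<phi> (x + y) = \<phi> x + \<phi> y" for x y by (rule lin_add[OF \<phi>(1)])
  have \<phi>s: "\<phi> (sH c x) = c * \<phi> x" for c x by (rule lin_scale[OF \<phi>(1)])
  have F: "trilinear_map sH s2 (\<lambda>x y z. s2 (\<phi> z) (t2 x y))"
    by (rule trilI; rule linI[OF vH v2]) (simp_all add: lsimps \<phi>a \<phi>s mult.commute)
  have e: "(\<Sum>i\<in>mI. sw (\<lambda>c d. s2 (\<phi> (mB i)) (t2 c d)) (\<Delta> (mA i))) = (\<Sum>i\<in>mI. \<Sum>l\<in>mI. s2 (\<phi> (mB i * mB l)) (t2 (mA i) (mA l)))"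
    by (rule ax1F[OF v2 F mR])
  have "(\<Sum>i\<in>mI. sw (\<lambda>c d. s2 (\<phi> (mB i)) (t2 c d)) (\<Delta> (mA i))) = (\<Sum>i\<in>mI. s2 (\<phi> (mB i)) (\<Delta> (mA i)))"
    by (simp add: sw_scale_fun2 sw_t2_id)
  also have "\<dots> = \<Delta> (mA j)"
    using sum_delta_scale[OF mfin j, of "\<lambda>i. \<Delta> (mA i)"] \<phi>(2) by (simp cong: sum.cong)
  finally have "\<Delta> (mA j) = (\<Sum>i\<in>mI. \<Sum>l\<in>mI. t2 (sH (\<phi> (mB i * mB l)) (mA i)) (mA l))"
    using e by (simp add: t2_scaleL)
  also have "\<dots> = (\<Sum>m\<in>mI \<times> mI. t2 (sH (\<phi> (mB (fst m) * mB (snd m))) (mA (fst m))) (mA (snd m)))"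
    by (simp add: sum.cartesian_product case_prod_beta)
  finally show ?thesis unfolding Good_def using PA P_scale by (intro exI conjI) (auto)
qed

lemma GoodB: assumes j: "j \<in> mI" shows "Good (mB j)"
proof -
  obtain \<phi> where \<phi>: "Vector_Spaces.linear sH (*) \<phi>" "\<And>i. i \<in> mI \<Longrightarrow> \<phi> (mA i) = (if i = j then 1 else 0)"
    using dualA[OF j] by blast
  have \<phi>a: "\<phi> (x + y) = \<phi> x + \<phi> y" for x y by (rule lin_add[OF \<phi>(1)])
  have \<phi>s: "\<phi> (sH c x) = c * \<phi> x" for c x by (rule lin_scale[OF \<phi>(1)])
  have F: "trilinear_map sH s2 (\<lambda>x y z. s2 (\<phi> x) (t2 y z))"
    by (rule trilI; rule linI[OF vH v2]) (simp_all add: lsimps \<phi>a \<phi>s mult.commute)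
  have e: "(\<Sum>i\<in>mI. sw (\<lambda>c d. s2 (\<phi> (mA i)) (t2 c d)) (\<Delta> (mB i))) = (\<Sum>i\<in>mI. \<Sum>l\<in>mI. s2 (\<phi> (mA i * mA l)) (t2 (mB l) (mB i)))"
    by (rule ax2F[OF v2 F mR])
  have "(\<Sum>i\<in>mI. sw (\<lambda>c d. s2 (\<phi> (mA i)) (t2 c d)) (\<Delta> (mB i))) = (\<Sum>i\<in>mI. s2 (\<phi> (mA i)) (\<Delta> (mB i)))"
    by (simp add: sw_scale_fun2 sw_t2_id)
  also have "\<dots> = \<Delta> (mB j)"
    using sum_delta_scale[OF mfin j, of "\<lambda>i. \<Delta> (mB i)"] \<phi>(2) by (simp cong: sum.cong)
  finally have "\<Delta> (mB j) = (\<Sum>i\<in>mI. \<Sum>l\<in>mI. t2 (sH (\<phi> (mA i * mA l)) (mB l)) (mB i))"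
    using e by (simp add: t2_scaleL)
  also have "\<dots> = (\<Sum>m\<in>mI \<times> mI. t2 (sH (\<phi> (mA (fst m) * mA (snd m))) (mB (snd m))) (mB (fst m)))"
    by (simp add: sum.cartesian_product case_prod_beta)
  finally show ?thesis unfolding Good_def using PB P_scale by (intro exI conjI) (auto)
qed

end


context SQT begin

lemma U1: assumes P: "Pp y" shows "sw (\<lambda>p q. S q * u0 * p) (\<Delta> y) = sH (\<epsilon> y) u0"
proof -
  let ?f = "\<lambda>c d. S d * c"
  have g_bil: "bilinear_map sH sH (\<lambda>c d. sw (\<lambda>a b. S (d * b) * (c * a)) R)"
    by (rule bilI; rule linI[OF vH vH]) (simp_all add: lsimps3)
  have e1: "sw ?f (R * \<Delta> y) = sw (\<lambda>p q. S q * u0 * p) (\<Delta> y)"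
  proof -
    have "sw ?f (R * \<Delta> y) = sw (\<lambda>a b. sw (\<lambda>p q. S q * (S b * a) * p) (\<Delta> y)) R"
      by (simp add: sw_prod[OF vH bil_u, symmetric] S_mult mult.assoc)
    also have "\<dots> = sw (\<lambda>p q. sw (\<lambda>a b. S q * (S b * a) * p) R) (\<Delta> y)" by (rule sw_swap)
    also have "\<dots> = sw (\<lambda>p q. S q * u0 * p) (\<Delta> y)" unfolding u0_def by (simp add: sw_sandwich)
    finally show ?thesis .
  qed
  have e2: "sw ?f (Tw (\<Delta> y) * R) = sH (\<epsilon> y) u0"
  proof -
    have "sw ?f (Tw (\<Delta> y) * R) = sw (\<lambda>c d. sw (\<lambda>a b. S (d * b) * (c * a)) R) (Tw (\<Delta> y))"
      by (simp add: sw_prod[OF vH bil_u, symmetric])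
    also have "\<dots> = sw (\<lambda>p q. sw (\<lambda>a b. S (p * b) * (q * a)) R) (\<Delta> y)"
      by (rule sw_T[OF vH g_bil])
    also have "\<dots> = sw (\<lambda>p q. sw (\<lambda>a b. S b * (S p * q) * a) R) (\<Delta> y)"
      by (simp add: S_mult mult.assoc)
    also have "\<dots> = sw (\<lambda>a b. S b * sw (\<lambda>p q. S p * q) (\<Delta> y) * a) R"
      by (subst sw_swap) (simp add: sw_sandwich)
    also have "\<dots> = sH (\<epsilon> y) u0" unfolding u0_def by (simp add: antipodeL_sw lsimps swsimps)
    finally show ?thesis .
  qed
  show ?thesis using e1 e2 P unfolding Pp_def by simp
qed

lemma U: assumes G: "Good x" shows "u0 * x = S (S x) * u0"
proof -
  obtain M :: "(nat \<times> nat) set" and Y Z where M: "\<Delta> x = (\<Sum>m\<in>M. t2 (Y m) (Z m))" "\<And>m. m \<in> M \<Longrightarrow> Pp (Y m)"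
    using G unfolding Good_def by blast
  have F: "trilinear_map sH sH (\<lambda>p q r. S (S r) * S q * u0 * p)"
    by (rule trilI; rule linI[OF vH vH]) (simp_all add: lsimps)
  have co: "sw (\<lambda>a b. sw (\<lambda>c d. S (S b) * S d * u0 * c) (\<Delta> a)) (\<Delta> x)
      = sw (\<lambda>a b. sw (\<lambda>c d. S (S d) * S c * u0 * a) (\<Delta> b)) (\<Delta> x)"
    by (rule coassoc_F[OF vH F])
  have r: "sw (\<lambda>a b. sw (\<lambda>c d. S (S d) * S c * u0 * a) (\<Delta> b)) (\<Delta> x) = u0 * x"
  proof -
    have lL: "Vector_Spaces.linear sH sH (\<lambda>z. S z * u0 * a)" for a
      by (rule linI[OF vH vH]) (simp_all add: lsimps)
    have "sw (\<lambda>c d. S (S d) * S c * u0 * a) (\<Delta> b) = sH (\<epsilon> b) (u0 * a)" for a b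
    proof -
      have "sw (\<lambda>c d. S (S d) * S c * u0 * a) (\<Delta> b) = sw (\<lambda>c d. (\<lambda>z. S z * u0 * a) (c * S d)) (\<Delta> b)"
        by (simp add: S_mult)
      also have "\<dots> = S (sH (\<epsilon> b) 1) * u0 * a"
        by (subst sw_applyL[OF lL, symmetric]) (simp add: antipodeR_sw)
      finally show ?thesis by (simp add: lsimps S_one)
    qed
    then have "sw (\<lambda>a b. sw (\<lambda>c d. S (S d) * S c * u0 * a) (\<Delta> b)) (\<Delta> x) = sw (\<lambda>a b. u0 * sH (\<epsilon> b) a) (\<Delta> x)"
      by (simp add: lsimps)
    also have "\<dots> = u0 * x" by (simp add: sw_multL[symmetric] counitR_sw)
    finally show ?thesis .
  qed
  have bG: "bilinear_map sH sH (\<lambda>a b. sw (\<lambda>c d. S (S b) * S d * u0 * c) (\<Delta> a))"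
  proof (rule bil_swD1[OF vH])
    show "bilinear_map sH sH (\<lambda>c d. S (S b) * S d * u0 * c)" for b
      by (rule bilI; rule linI[OF vH vH]) (simp_all add: lsimps)
    show "Vector_Spaces.linear sH sH (\<lambda>b. S (S b) * S d * u0 * c)" for c d
      by (rule linI[OF vH vH]) (simp_all add: lsimps)
  qed
  have l: "sw (\<lambda>a b. sw (\<lambda>c d. S (S b) * S d * u0 * c) (\<Delta> a)) (\<Delta> x) = S (S x) * u0"
  proof -
    have "sw (\<lambda>a b. sw (\<lambda>c d. S (S b) * S d * u0 * c) (\<Delta> a)) (\<Delta> x)
        = (\<Sum>m\<in>M. sw (\<lambda>c d. S (S (Z m)) * S d * u0 * c) (\<Delta> (Y m)))"
      by (rule sw_rep[OF vH bG M(1)])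
    also have "\<dots> = (\<Sum>m\<in>M. S (S (sH (\<epsilon> (Y m)) (Z m))) * u0)"
    proof (rule sum.cong[OF refl])
      fix m assume m: "m \<in> M"
      have "sw (\<lambda>c d. S (S (Z m)) * S d * u0 * c) (\<Delta> (Y m)) = S (S (Z m)) * sw (\<lambda>c d. S d * u0 * c) (\<Delta> (Y m))"
        by (simp add: sw_multL mult.assoc)
      also have "\<dots> = S (S (sH (\<epsilon> (Y m)) (Z m))) * u0" using U1[OF M(2)[OF m]] by (simp add: lsimps)
      finally show "sw (\<lambda>c d. S (S (Z m)) * S d * u0 * c) (\<Delta> (Y m)) = S (S (sH (\<epsilon> (Y m)) (Z m))) * u0" .
    qed
    also have "\<dots> = S (S (\<Sum>m\<in>M. sH (\<epsilon> (Y m)) (Z m))) * u0"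
      by (simp add: S_sum sum_distrib_right)
    also have "(\<Sum>m\<in>M. sH (\<epsilon> (Y m)) (Z m)) = x"
      using sw_rep[OF vH bil_counitL M(1)] counitL_sw by simp
    finally show ?thesis .
  qed
  show ?thesis using co l r by simp
qed

end


context SQT begin

lemma sw_SS: assumes V: "vector_space sV" and f: "bilinear_map sH sV f"
  shows "sw f (SSw y) = sw (\<lambda>a b. f (S a) (S b)) y"
proof -
  have "SSw y = (\<Sum>i<rN y. t2 (S (rA y i)) (S (rB y i)))"
    unfolding SSw_def sw_def ..
  then have "sw f (SSw y) = (\<Sum>i<rN y. f (S (rA y i)) (S (rB y i)))" by (rule sw_rep[OF V f])
  also have "\<dots> = sw (\<lambda>a b. f (S a) (S b)) y" unfolding sw_def ..
  finally show ?thesis .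
qed

lemma SS_one: "SSw 1 = 1" unfolding SSw_def by (simp add: sw_one[OF v2 bil_SS] S_one t2_one)
lemma T_one: "Tw 1 = 1" unfolding Tw_def by (simp add: sw_one[OF v2 bil_T] t2_one)
lemma SS_T: "SSw (Tw y) = Tw (SSw y)"
proof -
  have "SSw (Tw y) = sw (\<lambda>a b. t2 (S b) (S a)) y" unfolding SSw_def by (rule sw_T[OF v2 bil_SS])
  moreover have "Tw (SSw y) = sw (\<lambda>a b. t2 (S b) (S a)) y"
    unfolding SSw_def by (subst sw_applyL[OF lin_T]) (simp add: Tw_def sw_t2[OF v2 bil_T])
  ultimately show ?thesis by simp
qed

lemma RR': "R * rinv R = 1" "rinv R * R = 1"
  using Rinv_right[OF mR] Rinv_left[OF mR] rinvR_rep[OF mR] by simp_all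

lemma SS_rinvR: "SSw (rinv R) = rinv R"
proof -
  have "SSw (rinv R) * R = SSw (R * rinv R)" by (simp add: SS_mult SS_R)
  then have "SSw (rinv R) * R = 1" by (simp add: RR' SS_one)
  then have "SSw (rinv R) * R * rinv R = rinv R" by simp
  then show ?thesis by (simp add: mult.assoc RR')
qed

lemma u0_rep: "u0 = (\<Sum>i\<in>mI. S (mB i) * mA i)"
  unfolding u0_def by (rule sw_rep[OF vH bil_u mR])

lemma UA: "i \<in> mI \<Longrightarrow> u0 * mA i = S (S (mA i)) * u0" by (rule U[OF GoodA])
lemma UB: "i \<in> mI \<Longrightarrow> u0 * mB i = S (S (mB i)) * u0" by (rule U[OF GoodB])

lemma step2: "\<Delta> u0 = (\<Sum>l\<in>mI. \<Delta> (S (mB l)) * (\<Sum>i\<in>mI. \<Delta> (S (mB i)) * t2 (mA i) (mA l)))"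
proof -
  have F: "trilinear_map sH s2 (\<lambda>x y z. \<Delta> (S z) * t2 x y)"
    by (rule trilI; rule linI[OF vH v2]) (simp_all add: lsimps)
  have e: "(\<Sum>i\<in>mI. sw (\<lambda>c d. \<Delta> (S (mB i)) * t2 c d) (\<Delta> (mA i))) = (\<Sum>i\<in>mI. \<Sum>l\<in>mI. \<Delta> (S (mB i * mB l)) * t2 (mA i) (mA l))"
    by (rule ax1F[OF v2 F mR])
  have "\<Delta> u0 = (\<Sum>i\<in>mI. \<Delta> (S (mB i)) * \<Delta> (mA i))" unfolding u0_rep by (simp add: \<Delta>_sum \<Delta>_mult)
  also have "\<dots> = (\<Sum>i\<in>mI. sw (\<lambda>c d. \<Delta> (S (mB i)) * t2 c d) (\<Delta> (mA i)))"
    by (simp add: sw_multL[symmetric] sw_t2_id)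
  also have "\<dots> = (\<Sum>i\<in>mI. \<Sum>l\<in>mI. \<Delta> (S (mB l)) * (\<Delta> (S (mB i)) * t2 (mA i) (mA l)))"
    unfolding e by (simp add: S_mult \<Delta>_mult mult.assoc)
  also have "\<dots> = (\<Sum>l\<in>mI. \<Delta> (S (mB l)) * (\<Sum>i\<in>mI. \<Delta> (S (mB i)) * t2 (mA i) (mA l)))"
    by (subst sum.swap) (simp add: sum_distrib_left)
  finally show ?thesis .
qed

lemma step3: "(\<Sum>i\<in>mI. \<Delta> (S (mB i)) * t2 (mA i) y) = rinv R * t2 u0 y"
proof -
  have F: "trilinear_map sH s2 (\<lambda>x c d. t2 (S d * x) (S c * y))"
    by (rule trilI; rule linI[OF vH v2]) (simp_all add: lsimps)
  have e: "(\<Sum>i\<in>mI. sw (\<lambda>c d. t2 (S d * mA i) (S c * y)) (\<Delta> (mB i))) = (\<Sum>i\<in>mI. \<Sum>m\<in>mI. t2 (S (mB i) * (mA i * mA m)) (S (mB m) * y))"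
    by (rule ax2F[OF v2 F mR])
  have "(\<Sum>i\<in>mI. \<Delta> (S (mB i)) * t2 (mA i) y) = (\<Sum>i\<in>mI. sw (\<lambda>c d. t2 (S d * mA i) (S c * y)) (\<Delta> (mB i)))"
    by (simp add: \<Delta>_S DS_def sw_multR t2_mult)
  also have "\<dots> = (\<Sum>m\<in>mI. t2 (u0 * mA m) (S (mB m) * y))"
    unfolding e u0_rep by (subst sum.swap) (simp add: t2_sumL[symmetric] sum_distrib_right mult.assoc)
  also have "\<dots> = (\<Sum>m\<in>mI. t2 (S (S (mA m))) (S (mB m))) * t2 u0 y"
    by (simp add: UA sum_distrib_right t2_mult cong: sum.cong)
  also have "(\<Sum>m\<in>mI. t2 (S (S (mA m))) (S (mB m))) = SSw (rinv R)"
    unfolding SSw_def by (rule sw_rep[OF v2 bil_SS rinvR_rep[OF mR], symmetric])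
  finally show ?thesis by (simp add: SS_rinvR)
qed

lemma step5: assumes P: "Pp x" shows "\<Delta> x * rinv R = rinv R * Tw (\<Delta> x)"
proof -
  have "rinv R * (Tw (\<Delta> x) * R) * rinv R = rinv R * (R * \<Delta> x) * rinv R" using P unfolding Pp_def by simp
  then show ?thesis by (simp add: mult.assoc RR') (simp add: mult.assoc[symmetric] RR')
qed

lemma step6: "(\<Sum>l\<in>mI. Tw (\<Delta> (S (mB l))) * t2 u0 (mA l)) = t2 1 u0 * (\<Sum>m\<in>mI. t2 (S (mB m) * u0) (mA m))"
proof -
  have F: "trilinear_map sH s2 (\<lambda>x c d. t2 (S c * u0) (S d * x))"
    by (rule trilI; rule linI[OF vH v2]) (simp_all add: lsimps)
  have e: "(\<Sum>l\<in>mI. sw (\<lambda>c d. t2 (S c * u0) (S d * mA l)) (\<Delta> (mB l))) = (\<Sum>l\<in>mI. \<Sum>m\<in>mI. t2 (S (mB m) * u0) (S (mB l) * (mA l * mA m)))"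
    by (rule ax2F[OF v2 F mR])
  have "(\<Sum>l\<in>mI. Tw (\<Delta> (S (mB l))) * t2 u0 (mA l)) = (\<Sum>l\<in>mI. sw (\<lambda>c d. t2 (S c * u0) (S d * mA l)) (\<Delta> (mB l)))"
    by (simp add: \<Delta>_S T_DS SSw_def sw_multR t2_mult)
  also have "\<dots> = (\<Sum>l\<in>mI. \<Sum>m\<in>mI. t2 (S (mB m) * u0) (S (mB l) * (mA l * mA m)))"
    by (rule e)
  also have "\<dots> = (\<Sum>m\<in>mI. t2 (S (mB m) * u0) (u0 * mA m))"
    by (subst sum.swap) (simp add: t2_sumR[symmetric] sum_distrib_right mult.assoc u0_rep)
  also have "\<dots> = t2 1 u0 * (\<Sum>m\<in>mI. t2 (S (mB m) * u0) (mA m))"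
    by (simp add: sum_distrib_left t2_mult)
  finally show ?thesis .
qed

lemma step7: "(\<Sum>m\<in>mI. t2 (S (mB m) * u0) (mA m)) = t2 u0 1 * Tw (rinv R)"
proof -
  have g: "bilinear_map sH s2 (\<lambda>a b. t2 (S b * u0) a)"
    by (rule bilI; rule linI[OF vH v2]) (simp_all add: lsimps)
  have "(\<Sum>m\<in>mI. t2 (S (mB m) * u0) (mA m)) = sw (\<lambda>a b. t2 (S b * u0) a) R"
    by (rule sw_rep[OF v2 g mR, symmetric])
  also have "\<dots> = sw (\<lambda>a b. t2 (S b * u0) a) (SSw R)" by (simp add: SS_R)
  also have "\<dots> = sw (\<lambda>a b. t2 (S (S b) * u0) (S a)) R" by (rule sw_SS[OF v2 g])
  also have "\<dots> = (\<Sum>m\<in>mI. t2 (S (S (mB m)) * u0) (S (mA m)))"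
  proof -
    have g2: "bilinear_map sH s2 (\<lambda>a b. t2 (S (S b) * u0) (S a))"
      by (rule bilI; rule linI[OF vH v2]) (simp_all add: lsimps)
    show ?thesis by (rule sw_rep[OF v2 g2 mR])
  qed
  also have "\<dots> = (\<Sum>m\<in>mI. t2 u0 1 * t2 (mB m) (S (mA m)))"
    by (simp add: UB[symmetric] t2_mult cong: sum.cong)
  also have "\<dots> = t2 u0 1 * Tw (rinv R)"
    unfolding Tw_def sw_rep[OF v2 bil_T rinvR_rep[OF mR]] by (simp add: sum_distrib_left)
  finally show ?thesis .
qed

lemma Du_mid: "\<Delta> u0 = rinv R * t2 u0 u0 * Tw (rinv R)"
proof -
  have "\<Delta> u0 = (\<Sum>l\<in>mI. \<Delta> (S (mB l)) * rinv R * t2 u0 (mA l))"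
    unfolding step2 step3 by (simp add: mult.assoc)
  also have "\<dots> = (\<Sum>l\<in>mI. rinv R * (Tw (\<Delta> (S (mB l))) * t2 u0 (mA l)))"
    by (rule sum.cong[OF refl]) (simp add: step5[OF P_S[OF PB]] mult.assoc)
  also have "\<dots> = rinv R * (t2 1 u0 * (t2 u0 1 * Tw (rinv R)))"
    by (simp add: sum_distrib_left[symmetric] step6 step7)
  also have "\<dots> = rinv R * t2 u0 u0 * Tw (rinv R)"
    by (simp add: mult.assoc[symmetric] t2_mult)
  finally show ?thesis .
qed

end


lemma commute_inv: assumes "x * c = c * x" "c * c' = 1" "c' * c = (1::'a::ring_1)" shows "x * c' = c' * x"
proof -
  have "c' * x = c' * x * (c * c')" using assms by simp
  also have "\<dots> = c' * (x * c) * c'" by (simp add: mult.assoc)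
  also have "\<dots> = (c' * c) * x * c'" using assms(1) by (simp add: mult.assoc)
  also have "\<dots> = x * c'" using assms by simp
  finally show ?thesis by simp
qed

context SQT begin

lemma TT: "Tw (Tw y) = y"
proof -
  have "Tw (Tw y) = sw (\<lambda>a b. Tw (t2 b a)) y" unfolding Tw_def[of y] by (rule sw_applyL[OF lin_T])
  also have "\<dots> = sw t2 y" by (simp add: Tw_def sw_t2[OF v2 bil_T])
  finally show ?thesis by (simp add: sw_t2_id)
qed

lemma T_t2: "Tw (t2 a b) = t2 b a" unfolding Tw_def by (rule sw_t2[OF v2 bil_T])
lemma SS_t2: "SSw (t2 a b) = t2 (S a) (S b)" unfolding SSw_def by (rule sw_t2[OF v2 bil_SS])

lemma TR': "Tw R * Tw (rinv R) = 1" "Tw (rinv R) * Tw R = 1"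
  by (simp_all add: T_mult[symmetric] RR' T_one)

lemma S2_rep: "(\<Sum>i\<in>mI. t2 (S (S (mA i))) (S (S (mB i)))) = R"
proof -
  have "SSw R = (\<Sum>i\<in>mI. t2 (S (S (mA i))) (S (S (mB i))))"
    unfolding SSw_def by (rule sw_rep[OF v2 bil_SS SSR_rep[OF mR, symmetric]])
  then show ?thesis using SS_R by simp
qed

lemma uu_R: "t2 u0 u0 * R = R * t2 u0 u0"
proof -
  have "t2 u0 u0 * R = t2 u0 u0 * (\<Sum>i\<in>mI. t2 (mA i) (mB i))" by (rule arg_cong[OF mR])
  also have "\<dots> = (\<Sum>i\<in>mI. t2 (S (S (mA i))) (S (S (mB i))) * t2 u0 u0)"
    by (simp add: sum_distrib_left t2_mult UA UB cong: sum.cong)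
  also have "\<dots> = R * t2 u0 u0" by (simp add: sum_distrib_right[symmetric] S2_rep)
  finally show ?thesis .
qed

lemma uu_TR: "t2 u0 u0 * Tw R = Tw R * t2 u0 u0"
proof -
  have "Tw (t2 u0 u0 * R) = Tw (R * t2 u0 u0)" by (simp add: uu_R)
  then show ?thesis by (simp add: T_mult T_t2)
qed

definition "Q0 = Tw R * R"

lemma Q0_inv: "Q0 * (rinv R * Tw (rinv R)) = 1" "(rinv R * Tw (rinv R)) * Q0 = 1"
proof -
  have "Q0 * (rinv R * Tw (rinv R)) = Tw R * (R * rinv R) * Tw (rinv R)" unfolding Q0_def by (simp add: mult.assoc)
  then show "Q0 * (rinv R * Tw (rinv R)) = 1" by (simp add: RR' TR')
  have "(rinv R * Tw (rinv R)) * Q0 = rinv R * (Tw (rinv R) * Tw R) * R" unfolding Q0_def by (simp add: mult.assoc)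
  then show "(rinv R * Tw (rinv R)) * Q0 = 1" by (simp add: RR' TR')
qed

lemma rinvQ: "rinv Q0 = rinv R * Tw (rinv R)" by (rule rinv_eq[OF Q0_inv])

lemma uu_rinvQ: "t2 u0 u0 * rinv Q0 = rinv Q0 * t2 u0 u0"
proof -
  have a: "t2 u0 u0 * rinv R = rinv R * t2 u0 u0" by (rule commute_inv[OF uu_R RR'])
  have b: "t2 u0 u0 * Tw (rinv R) = Tw (rinv R) * t2 u0 u0" by (rule commute_inv[OF uu_TR TR'])
  show ?thesis unfolding rinvQ
    by (simp add: mult.assoc[symmetric] a) (simp add: mult.assoc b)
qed

lemma Du1: "\<Delta> u0 = rinv Q0 * t2 u0 u0"
proof -
  have b: "t2 u0 u0 * Tw (rinv R) = Tw (rinv R) * t2 u0 u0" by (rule commute_inv[OF uu_TR TR'])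
  show ?thesis unfolding Du_mid rinvQ by (simp add: mult.assoc b)
qed

lemma Du2: "\<Delta> u0 = t2 u0 u0 * rinv Q0" using Du1 uu_rinvQ by simp

lemma eps_u: "\<epsilon> u0 = 1"
proof -
  have "\<epsilon> u0 = (\<Sum>i\<in>mI. \<epsilon> (mB i) * \<epsilon> (mA i))" unfolding u0_rep by (simp add: \<epsilon>_sum \<epsilon>_mult \<epsilon>_S)
  also have "\<dots> = \<epsilon> (\<Sum>i\<in>mI. sH (\<epsilon> (mB i)) (mA i))" by (simp add: \<epsilon>_sum \<epsilon>_scale)
  also have "\<dots> = 1" using epsB[OF mR] \<epsilon>_one by simp
  finally show ?thesis .
qed

definition "Mw y = SSw (Tw y)"

lemma M_mult: "Mw (y * z) = Mw z * Mw y" unfolding Mw_def by (simp add: T_mult SS_mult)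
lemma M_one: "Mw 1 = 1" unfolding Mw_def by (simp add: T_one SS_one)
lemma M_Q: "Mw Q0 = Q0"
  unfolding Mw_def Q0_def by (simp add: T_mult TT SS_mult SS_T SS_R)
lemma M_rinvQ: "Mw (rinv Q0) = rinv Q0"
proof -
  have i1: "Q0 * rinv Q0 = 1" "rinv Q0 * Q0 = 1" using Q0_inv rinvQ by simp_all
  have "Q0 * Mw (rinv Q0) = 1" using M_mult[of "rinv Q0" Q0] M_Q i1 M_one by simp
  moreover have "Mw (rinv Q0) * Q0 = 1" using M_mult[of Q0 "rinv Q0"] M_Q i1 M_one by simp
  ultimately have "rinv Q0 = Mw (rinv Q0)" by (rule rinv_eq)
  then show ?thesis by simp
qed
lemma DS_M: "\<Delta> (S x) = Mw (\<Delta> x)" unfolding Mw_def by (simp add: \<Delta>_S DS_SS)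
lemma M_uu: "Mw (t2 u0 u0) = t2 (S u0) (S u0)" unfolding Mw_def by (simp add: T_t2 SS_t2)

lemma DSu1: "\<Delta> (S u0) = rinv Q0 * t2 (S u0) (S u0)"
  using DS_M[of u0] Du2 by (simp add: M_mult M_uu M_rinvQ)
lemma DSu2: "\<Delta> (S u0) = t2 (S u0) (S u0) * rinv Q0"
  using DS_M[of u0] Du1 by (simp add: M_mult M_uu M_rinvQ)

lemma main:
  "\<epsilon> u0 = 1 \<and>
   \<Delta> u0 = rinv Q0 * t2 u0 u0 \<and> \<Delta> u0 = t2 u0 u0 * rinv Q0 \<and>
   \<Delta> (S u0) = rinv Q0 * t2 (S u0) (S u0) \<and> \<Delta> (S u0) = t2 (S u0) (S u0) * rinv Q0 \<and>
   \<Delta> (u0 * S u0) = (rinv Q0) ^ 2 * t2 (u0 * S u0) (u0 * S u0) \<and>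
   \<Delta> (u0 * S u0) = t2 (u0 * S u0) (u0 * S u0) * (rinv Q0) ^ 2"
proof -
  have c1: "t2 (S u0) (S u0) * rinv Q0 = rinv Q0 * t2 (S u0) (S u0)" using DSu1 DSu2 by simp
  have "\<Delta> (u0 * S u0) = rinv Q0 * (t2 u0 u0 * rinv Q0) * t2 (S u0) (S u0)"
    by (simp add: \<Delta>_mult Du1 DSu1 mult.assoc)
  also have "\<dots> = (rinv Q0) ^ 2 * t2 (u0 * S u0) (u0 * S u0)"
    by (simp add: uu_rinvQ power2_eq_square mult.assoc t2_mult)
  finally have e1: "\<Delta> (u0 * S u0) = (rinv Q0) ^ 2 * t2 (u0 * S u0) (u0 * S u0)" .
  have "\<Delta> (u0 * S u0) = t2 u0 u0 * (rinv Q0 * t2 (S u0) (S u0)) * rinv Q0"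
    by (simp add: \<Delta>_mult Du2 DSu2 mult.assoc)
  also have "\<dots> = t2 (u0 * S u0) (u0 * S u0) * (rinv Q0) ^ 2"
    by (simp add: c1[symmetric] power2_eq_square mult.assoc t2_mult[symmetric])
  finally have e2: "\<Delta> (u0 * S u0) = t2 (u0 * S u0) (u0 * S u0) * (rinv Q0) ^ 2" .
  show ?thesis using eps_u Du1 Du2 DSu1 DSu2 e1 e2 by blast
qed

lemma u0_eq: "drinfeld_u sH s2 t2 S R = u0"
  unfolding drinfeld_u_def u0_def by (rule sw_lift2[OF vH bil_u])
lemma Q0_eq: "R21 s2 t2 R * R = Q0"
  unfolding R21_def Q0_def Tw_def by (simp add: sw_lift2[OF v2 bil_T])

end

theorem proposition3p3:
  fixes sH :: "'k::field \<Rightarrow> 'h::ring_1 \<Rightarrow> 'h"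
    and s2 :: "'k \<Rightarrow> 'hh::ring_1 \<Rightarrow> 'hh" and t2 :: "'h \<Rightarrow> 'h \<Rightarrow> 'hh"
    and s3 :: "'k \<Rightarrow> 'hhh::ring_1 \<Rightarrow> 'hhh" and t3 :: "'h \<Rightarrow> 'h \<Rightarrow> 'h \<Rightarrow> 'hhh"
    and \<Delta> :: "'h \<Rightarrow> 'hh" and \<epsilon> :: "'h \<Rightarrow> 'k" and S :: "'h \<Rightarrow> 'h" and R :: 'hh
  assumes sqt: "semiquasitriangular sH s2 t2 s3 t3 \<Delta> \<epsilon> S R"
  defines "u \<equiv> drinfeld_u sH s2 t2 S R"
    and "Q \<equiv> R21 s2 t2 R * R"
  shows "\<epsilon> u = 1 \<and>
         \<Delta> u = rinv Q * t2 u u \<and> \<Delta> u = t2 u u * rinv Q \<and>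
         \<Delta> (S u) = rinv Q * t2 (S u) (S u) \<and> \<Delta> (S u) = t2 (S u) (S u) * rinv Q \<and>
         \<Delta> (u * S u) = (rinv Q) ^ 2 * t2 (u * S u) (u * S u) \<and>
         \<Delta> (u * S u) = t2 (u * S u) (u * S u) * (rinv Q) ^ 2"
proof -
  interpret SQT sH s2 t2 s3 t3 \<Delta> \<epsilon> S R by (rule SQT.intro[OF sqt])
  show ?thesis unfolding u_def Q_def u0_eq Q0_eq by (rule main)
qed

end
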